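(* Let $p$ be an odd prime, $m\ge3$ odd, $k\ge1$ even with $\gcd(m,k)=1$, and $\lambda$ a fixed nonsquare in $\mathbb{F}_p$. As $(a,b,c)$ runs through $\mathbb{F}_{p^m}^3$, the values of $S(a,b,c)$ and their frequencies are: - $2(p-1)p^m$: $1$; - $(p-1)p^m$: $2(p^m-1)$; - $(p-1)p^{\frac{m+1}{2}}$: $(p^m-1)(p^m-p^{m-1})(p^{m-1}+p^{\frac{m-1}{2}})$; - $-(p-1)p^{\frac{m+1}{2}}$: $(p^m-1)(p^m-p^{m-1})(p^{m-1}-p^{\frac{m-1}{2}})$; - $2(p-1)p^{\frac{m+1}{2}}$: $\frac14(p^m-1)(p^{m-1}+p^{\frac{m-1}{2}})^2$; - $-2(p-1)p^{\frac{m+1}{2}}$: $\frac14(p^m-1)(p^{m-1}-p^{\frac{m-1}{2}})^2$; - $0$: $(p^m-1)\big(p^{2m}+\frac32p^{2(m-1)}-2p^{2m-1}+p^m-\frac12p^{m-1}-1\big)$.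
   Context: $\mathrm{Tr}$ is the trace from $\mathbb{F}_{p^m}$ to $\mathbb{F}_p$ and $\zeta_p=e^{2\pi i/p}$. $S(a,b,c)=\sum_{y\in\mathbb{F}_p^*}\sum_{x\in\mathbb{F}_{p^m}}\big(\zeta_p^{y\,\mathrm{Tr}((a+b)x^2+cx^{p^k+1})}+\zeta_p^{y\,\mathrm{Tr}((a-b)\lambda x^2+c\lambda x^{p^k+1})}\big)$. *)

theory Defs
  imports Complex_Main "HOL-Computational_Algebra.Primes"
begin

definition tr :: "nat \<Rightarrow> nat \<Rightarrow> 'a::field \<Rightarrow> 'a" where
  "tr p m x = (\<Sum>i<m. x ^ (p ^ i))"

definition fp_val :: "nat \<Rightarrow> 'a::field \<Rightarrow> nat" where
  "fp_val p x = (THE j. j < p \<and> of_nat j = x)"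

definition zeta :: "nat \<Rightarrow> complex" where
  "zeta p = cis (2 * pi / real p)"

definition S :: "nat \<Rightarrow> nat \<Rightarrow> nat \<Rightarrow> 'a::{field,finite} \<Rightarrow> 'a \<Rightarrow> 'a \<Rightarrow> 'a \<Rightarrow> complex" where
  "S p m k lam a b c =
     (\<Sum>y\<in>{1..<p}. \<Sum>x\<in>(UNIV::'a set).
        zeta p ^ (y * fp_val p (tr p m ((a + b) * x ^ 2 + c * x ^ (p ^ k + 1))))
      + zeta p ^ (y * fp_val p (tr p m ((a - b) * lam * x ^ 2 + c * lam * x ^ (p ^ k + 1)))))"

end

theory Submission
  imports Defs "HOL-Computational_Algebra.Computational_Algebra" "HOL-Number_Theory.Cong"
begin

locale ffield =
  fixes p m :: nat and ty :: "'a::{field,finite} itself"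
  assumes prime_p: "prime p" and odd_p: "odd p"
    and card_UNIV: "card (UNIV::'a set) = p ^ m" and char_p: "of_nat p = (0::'a)" and m_pos: "m \<ge> 1"
begin

lemma CHAR_eq: "CHAR('a) = p"
proof -
  have pos: "CHAR('a) > 0" using finite_imp_CHAR_pos[of] by (simp add: finite_imp_CHAR_pos)
  have pr: "prime CHAR('a)" using prime_CHAR_semidom pos by blast
  have "CHAR('a) dvd p" using char_p by (simp add: of_nat_eq_0_iff_char_dvd)
  thus ?thesis using pr prime_p primes_dvd_imp_eq by blast
qed

lemma p_gt1: "p > 1" using prime_p prime_gt_1_nat by blast
lemma p_ge3: "p \<ge> 3" using odd_p p_gt1 by presburger

lemma of_nat_eq_iff: "(of_nat i::'a) = of_nat j \<longleftrightarrow> i mod p = j mod p"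
  using of_nat_eq_iff_cong_CHAR[where 'a='a, of i j] CHAR_eq by (simp add: cong_def)

lemma of_nat_0_iff: "(of_nat i::'a) = 0 \<longleftrightarrow> p dvd i"
  using of_nat_eq_0_iff_char_dvd CHAR_eq by metis

lemma two_ne0: "(2::'a) \<noteq> 0"
proof
  assume "(2::'a) = 0"
  hence "(of_nat 2::'a) = 0" by simp
  hence "p dvd 2" using of_nat_0_iff by blast
  thus False using p_ge3 dvd_imp_le[of p 2] by simp
qed

lemma frob_add: "(x + y::'a) ^ (p ^ n) = x ^ (p ^ n) + y ^ (p ^ n)"
  by (rule freshmans_dream') (simp_all add: CHAR_eq prime_p)

lemma frob_sum: "(sum f A :: 'a) ^ (p ^ n) = (\<Sum>i\<in>A. f i ^ (p ^ n))"
  by (rule freshmans_dream_sum') (simp_all add: CHAR_eq prime_p)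

lemma frob_minus: "(- x::'a) ^ (p ^ n) = - (x ^ (p ^ n))"
proof -
  have "odd (p ^ n)" using odd_p by simp
  thus ?thesis by (simp add: power_minus_odd)
qed

lemma frob_diff: "(x - y::'a) ^ (p ^ n) = x ^ (p ^ n) - y ^ (p ^ n)"
  using frob_add[of x "-y" n] frob_minus[of y n] by simp

lemma frob_inj: "(x::'a) ^ (p ^ n) = y ^ (p ^ n) \<Longrightarrow> x = y"
  using frob_diff[of x y n] by (metis eq_iff_diff_eq_0 power_eq_0_iff)

lemma pow_card: "(x::'a) ^ card (UNIV::'a set) = x"
proof (cases "x = 0")
  case False
  have "x * (\<Prod>y\<in>UNIV-{0}. x * y) = x * x ^ (card (UNIV :: 'a set) - 1) * \<Prod>(UNIV-{0})"
    by (simp add: prod.distrib mult_ac)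
  also have "x * x ^ (card (UNIV :: 'a set) - 1) = x ^ Suc (card (UNIV :: 'a set) - 1)"
    by (subst power_Suc) auto
  also have "Suc (card (UNIV :: 'a set) - 1) = card (UNIV :: 'a set)"
    using finite_UNIV_card_ge_0[where ?'a = 'a] by simp
  also have "(\<Prod>y\<in>UNIV-{0}. x * y) = (\<Prod>y\<in>UNIV-{0}. y)"
    by (rule prod.reindex_bij_witness[of _ "\<lambda>y. y / x" "\<lambda>y. x * y"]) (use False in auto)
  finally show ?thesis
    by simp
qed (use finite_UNIV_card_ge_0[where ?'a = 'a] in auto)

lemma pow_pm: "(x::'a) ^ (p ^ m) = x"
  using pow_card card_UNIV by simp

lemma pow_pm_mult: "(x::'a) ^ (p ^ (m * j)) = x"
  by (induction j) (simp_all add: power_add power_mult pow_pm)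

end


context ffield begin

definition PF :: "'a set" where "PF = range of_nat"

lemma PF_eq: "PF = of_nat ` {..<p}"
proof -
  have "(of_nat j::'a) \<in> of_nat ` {..<p}" for j
  proof -
    have "(of_nat j::'a) = of_nat (j mod p)" using of_nat_eq_iff by simp
    moreover have "j mod p < p" using p_gt1 by simp
    ultimately show ?thesis by (metis image_eqI lessThan_iff)
  qed
  thus ?thesis unfolding PF_def by auto
qed

lemma inj_PF: "inj_on (of_nat::nat\<Rightarrow>'a) {..<p}"
  by (auto simp: inj_on_def of_nat_eq_iff)

lemma card_PF: "card PF = p"
  unfolding PF_eq using card_image[OF inj_PF] by simp

lemma finite_PF: "finite PF" by simp

lemma of_nat_pow_p: "(of_nat j::'a) ^ p = of_nat j"
proof (induction j)
  case (Suc j)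
  have "(of_nat (Suc j)::'a) ^ p = (of_nat j + 1) ^ (p ^ 1)" by (simp add: add.commute)
  also have "\<dots> = of_nat j ^ (p^1) + 1 ^ (p^1)" by (rule frob_add)
  finally show ?case using Suc by (simp add: add.commute)
qed (use p_gt1 in auto)

lemma PF_char: "x \<in> PF \<longleftrightarrow> (x::'a) ^ p = x"
proof
  assume "x \<in> PF" thus "x ^ p = x" unfolding PF_def using of_nat_pow_p by auto
next
  assume x: "x ^ p = x"
  define P where "P = monom (1::'a) p + [:0,-1:]"
  have dP: "degree P = p" unfolding P_def using p_gt1
    by (subst degree_add_eq_left) (simp_all add: degree_monom_eq)
  have P0: "P \<noteq> 0" using dP p_gt1 by auto
  have roots: "{y. poly P y = 0} = {y. y ^ p = y}" unfolding P_def by (auto simp: poly_monom)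
  have fin: "finite {y::'a. y ^ p = y}" by simp
  have sub: "PF \<subseteq> {y. y ^ p = y}" unfolding PF_def using of_nat_pow_p by auto
  have "card {y::'a. y ^ p = y} \<le> p" using card_poly_roots_bound[OF P0] dP roots by simp
  hence "PF = {y. y ^ p = y}" using card_PF sub fin by (intro card_seteq) auto
  thus "x \<in> PF" using x by auto
qed

lemma PF_pow_iter: "x \<in> PF \<Longrightarrow> x ^ (p ^ n) = x"
proof (induction n)
  case (Suc n)
  have "x ^ (p ^ Suc n) = (x ^ (p ^ n)) ^ p" by (simp add: power_mult[symmetric] mult.commute)
  thus ?case using Suc PF_char by simp
qed simp

lemma PF_0[simp]: "0 \<in> PF" and PF_1[simp]: "1 \<in> PF"
  using PF_char p_gt1 by (auto simp: power_0_left)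

lemma PF_add: "x \<in> PF \<Longrightarrow> y \<in> PF \<Longrightarrow> x + y \<in> PF"
  using frob_add[of x y 1] PF_char by simp
lemma PF_uminus: "x \<in> PF \<Longrightarrow> - x \<in> PF"
  using frob_minus[of x 1] PF_char by simp
lemma PF_diff: "x \<in> PF \<Longrightarrow> y \<in> PF \<Longrightarrow> x - y \<in> PF"
  using frob_diff[of x y 1] PF_char by simp
lemma PF_mult: "x \<in> PF \<Longrightarrow> y \<in> PF \<Longrightarrow> x * y \<in> PF"
  using PF_char by (simp add: power_mult_distrib)
lemma PF_divide: "x \<in> PF \<Longrightarrow> y \<in> PF \<Longrightarrow> x / y \<in> PF"
  using PF_char by (simp add: power_divide)
lemma PF_power: "x \<in> PF \<Longrightarrow> x ^ n \<in> PF"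
  using PF_char by (metis power_mult power_mult[symmetric] mult.commute)
lemma PF_of_nat[simp]: "of_nat n \<in> PF" unfolding PF_def by auto
lemma PF_numeral[simp]: "numeral n \<in> PF" using PF_of_nat[of "numeral n"] by simp

lemma pow_iter_mult: "(x::'a) ^ (p ^ a) = x \<Longrightarrow> x ^ (p ^ (a * u)) = x"
proof (induction u)
  case (Suc u)
  have "x ^ (p ^ (a * Suc u)) = (x ^ (p ^ (a * u))) ^ (p ^ a)"
    by (simp add: power_add power_mult[symmetric] mult.commute)
  thus ?case using Suc by simp
qed simp

lemma pow_iter_gcd:
  assumes a: "(x::'a) ^ (p ^ a) = x" and b: "x ^ (p ^ b) = x"
  shows "x ^ (p ^ gcd a b) = x"
proof (cases "a = 0")
  case True thus ?thesis using b by simp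
next
  case False
  obtain u v where uv: "a * u = b * v + gcd a b" using bezout_nat[OF False] by blast
  have "x = x ^ (p ^ (a * u))" using pow_iter_mult[OF a] by simp
  also have "\<dots> = (x ^ (p ^ gcd a b)) ^ (p ^ (b * v))"
    by (simp add: uv power_add power_mult[symmetric] mult.commute)
  finally have "(x ^ (p ^ gcd a b)) ^ (p ^ (b * v)) = x ^ (p ^ (b * v))"
    using pow_iter_mult[OF b] by simp
  thus ?thesis by (rule frob_inj)
qed

lemma fixed_PF:
  assumes "(x::'a) ^ (p ^ a) = x" and "coprime a m"
  shows "x \<in> PF"
proof -
  have "x ^ (p ^ gcd a m) = x" using pow_iter_gcd[OF assms(1) pow_pm] .
  thus ?thesis using assms(2) PF_char by simp
qed

lemma fp_val_of_nat: "fp_val p (of_nat j :: 'a) = j mod p"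
  unfolding fp_val_def
proof (rule the_equality)
  show "j mod p < p \<and> (of_nat (j mod p)::'a) = of_nat j" using p_gt1 of_nat_eq_iff by simp
next
  fix i assume "i < p \<and> (of_nat i::'a) = of_nat j"
  hence "i < p" "i mod p = j mod p" using of_nat_eq_iff by auto
  thus "i = j mod p" by simp
qed

lemma zeta_p: "zeta p ^ p = 1"
proof -
  have "zeta p ^ p = cis (real p * (2 * pi / real p))" unfolding zeta_def by (rule DeMoivre)
  also have "real p * (2 * pi / real p) = 2 * pi" using p_gt1 by simp
  finally show ?thesis by simp
qed

lemma zeta_pow_mod: "zeta p ^ (j mod p) = zeta p ^ j"
proof -
  have "zeta p ^ j = zeta p ^ (p * (j div p) + j mod p)" by simp
  also have "\<dots> = zeta p ^ (j mod p)" by (simp only: power_add power_mult zeta_p) simp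
  finally show ?thesis by simp
qed

lemma zeta_ne1: assumes "0 < j" "j < p" shows "zeta p ^ j \<noteq> 1"
proof
  assume "zeta p ^ j = 1"
  hence "cis (real j * (2 * pi / real p)) = 1" unfolding zeta_def by (simp add: DeMoivre)
  hence "cos (real j * (2 * pi / real p)) = 1" by (metis cis.sel(1) one_complex.sel(1))
  then obtain n :: int where n: "real j * (2 * pi / real p) = of_int n * 2 * pi" using cos_one_2pi_int by auto
  hence "real j = n * real p" using p_gt1 by (simp add: field_simps)
  hence "int j = n * int p" by (metis of_int_eq_iff of_int_mult of_int_of_nat_eq)
  moreover have "n > 0" using \<open>real j = n * real p\<close> assms p_gt1
    by (smt (verit) of_nat_0_less_iff mult_nonpos_nonneg of_int_le_0_iff of_nat_0_le_iff)
  ultimately have "int j \<ge> int p" by (smt (verit) mult_le_cancel_right1 of_nat_0_le_iff)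
  thus False using assms by simp
qed

lemma norm_zeta: "norm (zeta p) = 1" unfolding zeta_def by simp

definition chi :: "'a \<Rightarrow> complex" where "chi x = zeta p ^ fp_val p x"

lemma chi_of_nat: "chi (of_nat j) = zeta p ^ j"
  unfolding chi_def fp_val_of_nat zeta_pow_mod ..

lemma PF_obtain: assumes "x \<in> PF" obtains j where "x = of_nat j" "j < p"
  using assms PF_eq by auto

lemma chi_add: "x \<in> PF \<Longrightarrow> y \<in> PF \<Longrightarrow> chi (x + y) = chi x * chi y"
  by (metis PF_obtain chi_of_nat of_nat_add power_add)

lemma chi_0[simp]: "chi 0 = 1" using chi_of_nat[of 0] by simp

lemma chi_ne1: "x \<in> PF \<Longrightarrow> x \<noteq> 0 \<Longrightarrow> chi x \<noteq> 1"
  by (metis PF_obtain chi_of_nat zeta_ne1 of_nat_0 neq0_conv)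

lemma norm_chi: "norm (chi x) = 1" unfolding chi_def by (simp add: norm_power norm_zeta)

lemma chi_uminus: "x \<in> PF \<Longrightarrow> chi (- x) = cnj (chi x)"
proof -
  assume x: "x \<in> PF"
  have "chi (- x) * chi x = 1" using chi_add[OF PF_uminus[OF x] x] by simp
  moreover have "cnj (chi x) * chi x = 1" using norm_chi[of x]
    by (metis complex_norm_square mult.commute of_real_1 power_one)
  ultimately show ?thesis
    by (metis mult_cancel_right norm_chi norm_zero zero_neq_one)
qed

end


lemma sum_zero_shift:
  fixes f :: "'b \<Rightarrow> complex"
  assumes "bij_betw h A A" "\<And>x. x \<in> A \<Longrightarrow> f (h x) = c * f x" "c \<noteq> 1"
  shows "sum f A = 0"
proof -
  have "sum f A = sum (f \<circ> h) A" using sum.reindex_bij_betw[OF assms(1), of f] by simp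
  also have "\<dots> = c * sum f A" by (simp add: sum_distrib_left assms(2))
  finally have "(1 - c) * sum f A = 0" by (simp add: algebra_simps)
  thus ?thesis using assms(3) by simp
qed

context ffield begin

abbreviation Tr :: "'a \<Rightarrow> 'a" where "Tr \<equiv> tr p m"

lemma tr_add: "Tr (x + y) = Tr x + Tr y"
  unfolding tr_def by (simp add: frob_add sum.distrib)

lemma tr_diff: "Tr (x - y) = Tr x - Tr y"
  unfolding tr_def by (simp add: frob_diff sum_subtractf)

lemma tr_uminus: "Tr (- x) = - Tr x"
  unfolding tr_def by (simp add: frob_minus sum_negf)

lemma tr_0[simp]: "Tr 0 = 0"
  unfolding tr_def using p_gt1 by (simp add: power_0_left)

lemma tr_sum: "Tr (sum f A) = (\<Sum>i\<in>A. Tr (f i))"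
  unfolding tr_def by (simp add: frob_sum sum.swap[of _ A])

lemma tr_in_PF: "Tr x \<in> PF"
proof -
  let ?f = "\<lambda>i. x ^ (p ^ i)"
  have "(Tr x) ^ (p ^ 1) = (\<Sum>i<m. ?f i ^ (p ^ 1))" unfolding tr_def by (rule frob_sum)
  also have "\<dots> = (\<Sum>i<m. ?f (Suc i))" by (simp add: power_mult[symmetric] mult.commute)
  also have "\<dots> = (\<Sum>i<m. ?f i)"
  proof -
    have "(\<Sum>i<Suc m. ?f i) = ?f 0 + (\<Sum>i<m. ?f (Suc i))" by (rule sum.lessThan_Suc_shift)
    moreover have "(\<Sum>i<Suc m. ?f i) = (\<Sum>i<m. ?f i) + ?f m" by simp
    moreover have "?f m = ?f 0" using pow_pm by simp
    ultimately show ?thesis by simp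
  qed
  finally show ?thesis unfolding tr_def using PF_char by simp
qed

lemma tr_scale: "s \<in> PF \<Longrightarrow> Tr (s * x) = s * Tr x"
  unfolding tr_def by (simp add: power_mult_distrib PF_pow_iter sum_distrib_left)

lemma tr_frob: "Tr (x ^ (p ^ j)) = Tr x"
proof -
  have "Tr (x ^ (p ^ j)) = (\<Sum>i<m. (x ^ (p ^ i)) ^ (p ^ j))"
    unfolding tr_def by (simp add: power_mult[symmetric] mult.commute)
  also have "\<dots> = (Tr x) ^ (p ^ j)" unfolding tr_def by (rule frob_sum[symmetric])
  also have "\<dots> = Tr x" using PF_pow_iter tr_in_PF by simp
  finally show ?thesis .
qed

lemma degree_trpoly: "n \<ge> 1 \<Longrightarrow> degree (\<Sum>i<n. monom (1::'a) (p ^ i)) = p ^ (n - 1)"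
proof (induction n)
  case (Suc n)
  show ?case
  proof (cases "n = 0")
    case True thus ?thesis by (simp add: degree_monom_eq)
  next
    case False
    hence "degree (\<Sum>i<n. monom (1::'a) (p ^ i)) = p ^ (n - 1)" using Suc by simp
    moreover have "p ^ (n - 1) < p ^ n" using p_gt1 False by simp
    ultimately have "degree ((\<Sum>i<n. monom (1::'a) (p ^ i)) + monom 1 (p ^ n)) = p ^ n"
      by (subst degree_add_eq_right) (simp_all add: degree_monom_eq)
    thus ?thesis by simp
  qed
qed simp

lemma tr_nonzero: "\<exists>x. Tr x \<noteq> 0"
proof (rule ccontr)
  assume "\<not> ?thesis"
  hence all: "\<forall>x. Tr x = 0" by simp
  define P where "P = (\<Sum>i<m. monom (1::'a) (p ^ i))"
  have dP: "degree P = p ^ (m - 1)" unfolding P_def using degree_trpoly m_pos by simp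
  have P0: "P \<noteq> 0"
  proof
    assume "P = 0"
    hence "p ^ (m - 1) = 0" using dP by simp
    thus False using p_gt1 by simp
  qed
  have "poly P x = Tr x" for x unfolding P_def tr_def by (simp add: poly_sum poly_monom)
  hence "{x. poly P x = 0} = UNIV" using all by auto
  hence "card (UNIV::'a set) \<le> p ^ (m - 1)" using card_poly_roots_bound[OF P0] dP by simp
  moreover have "p ^ (m - 1) < p ^ m" using p_gt1 m_pos by simp
  ultimately show False using card_UNIV by simp
qed

lemma tr_nondeg: "a \<noteq> 0 \<Longrightarrow> \<exists>x. Tr (a * x) \<noteq> 0"
proof -
  assume a: "a \<noteq> 0"
  obtain x where "Tr x \<noteq> 0" using tr_nonzero by blast
  hence "Tr (a * (x / a)) \<noteq> 0" using a by simp
  thus ?thesis by blast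
qed

lemma char_sum: "(\<Sum>x\<in>UNIV. chi (Tr (a * x))) = (if a = 0 then of_nat (card (UNIV::'a set)) else 0)"
proof (cases "a = 0")
  case False
  obtain z where z: "Tr (a * z) \<noteq> 0" using tr_nondeg[OF False] by blast
  have "(\<Sum>x\<in>UNIV. chi (Tr (a * x))) = 0"
  proof (rule sum_zero_shift[where h = "\<lambda>x. x + z" and c = "chi (Tr (a * z))"])
    show "bij_betw (\<lambda>x. x + z) UNIV (UNIV::'a set)"
      by (rule bij_betwI[where g = "\<lambda>x. x - z"]) auto
    show "chi (Tr (a * (x + z))) = chi (Tr (a * z)) * chi (Tr (a * x))" for x
      by (simp add: distrib_left tr_add chi_add tr_in_PF mult.commute)
    show "chi (Tr (a * z)) \<noteq> 1" using chi_ne1 tr_in_PF z by blast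
  qed
  thus ?thesis using False by simp
qed simp

lemma PF_char_sum: assumes "t \<in> PF" shows "(\<Sum>s\<in>PF. chi (s * t)) = (if t = 0 then of_nat p else 0)"
proof (cases "t = 0")
  case True thus ?thesis by (simp add: card_PF)
next
  case False
  have "(\<Sum>s\<in>PF. chi (s * t)) = 0"
  proof (rule sum_zero_shift[where h = "\<lambda>s. s + 1" and c = "chi t"])
    show "bij_betw (\<lambda>s. s + 1) PF PF"
      by (rule bij_betwI[where g = "\<lambda>x. x - 1"]) (auto intro: PF_add PF_diff)
    show "chi ((s + 1) * t) = chi t * chi (s * t)" if "s \<in> PF" for s
    proof -
      have "chi ((s + 1) * t) = chi (s * t + t)" by (simp add: distrib_right)
      also have "\<dots> = chi (s * t) * chi t" using chi_add PF_mult that assms by blast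
      finally show ?thesis by simp
    qed
    show "chi t \<noteq> 1" using chi_ne1 assms False by blast
  qed
  thus ?thesis using False by simp
qed

end


context ffield begin
definition subsp :: "'a set \<Rightarrow> bool" where
  "subsp W \<longleftrightarrow> 0 \<in> W \<and> (\<forall>x\<in>W. \<forall>z\<in>W. x + z \<in> W) \<and> (\<forall>s\<in>PF. \<forall>x\<in>W. s * x \<in> W)"

definition gs :: "'a \<Rightarrow> complex" where "gs a = (\<Sum>s\<in>PF. chi (a * s ^ 2))"

lemma subsp_UNIV: "subsp UNIV" unfolding subsp_def by auto
end

locale qform = ffield p m ty for p m and ty :: "'a::{field,finite} itself" +
  fixes Q :: "'a \<Rightarrow> 'a"
  assumes Q_PF: "Q x \<in> PF"
    and Q_scale: "s \<in> PF \<Longrightarrow> Q (s * x) = s ^ 2 * Q x"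
    and Bf_add_left0: "Q ((x + y) + z) - Q (x + y) - Q z = (Q (x + z) - Q x - Q z) + (Q (y + z) - Q y - Q z)"
begin

definition Bf :: "'a \<Rightarrow> 'a \<Rightarrow> 'a" where "Bf x z = Q (x + z) - Q x - Q z"

definition rad :: "'a set \<Rightarrow> 'a set" where "rad W = {x\<in>W. \<forall>z\<in>W. Bf x z = 0}"

lemma Bf_add_left: "Bf (x + y) z = Bf x z + Bf y z"
  unfolding Bf_def by (rule Bf_add_left0)

lemma Bf_sym: "Bf x z = Bf z x"
  unfolding Bf_def by (simp add: add.commute algebra_simps)

lemma Bf_add_right: "Bf z (x + y) = Bf z x + Bf z y"
  using Bf_add_left Bf_sym by metis

lemma Q_0[simp]: "Q 0 = 0"
  using Q_scale[of 0 0] by simp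

lemma Bf_0_left[simp]: "Bf 0 z = 0" unfolding Bf_def by simp
lemma Bf_0_right[simp]: "Bf z 0 = 0" unfolding Bf_def by simp

lemma Bf_uminus_left: "Bf (- x) z = - Bf x z"
proof -
  have "Bf x z + Bf (- x) z = 0" using Bf_add_left[of x "- x" z] by simp
  thus ?thesis by (metis neg_eq_iff_add_eq_0)
qed

lemma Bf_of_nat_left: "Bf (of_nat n * x) z = of_nat n * Bf x z"
proof (induction n)
  case (Suc n)
  have "Bf (of_nat (Suc n) * x) z = Bf (of_nat n * x + x) z" by (simp add: algebra_simps)
  also have "\<dots> = of_nat n * Bf x z + Bf x z" by (simp add: Bf_add_left Suc)
  finally show ?case by (simp add: algebra_simps)
qed simp

lemma Bf_scale_left: "s \<in> PF \<Longrightarrow> Bf (s * x) z = s * Bf x z"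
  unfolding PF_def using Bf_of_nat_left by auto

lemma Bf_scale_right: "s \<in> PF \<Longrightarrow> Bf z (s * x) = s * Bf z x"
  using Bf_scale_left Bf_sym by metis

lemma Bf_PF: "Bf x z \<in> PF" unfolding Bf_def using Q_PF PF_diff by simp

lemma Bf_self: "Bf x x = 2 * Q x"
proof -
  have "Q (x + x) = Q (2 * x)" by simp
  also have "\<dots> = 4 * Q x" using Q_scale[of 2 x] by simp
  finally show ?thesis unfolding Bf_def by simp
qed

lemma Q_expand: "Q (x + z) = Q x + Q z + Bf x z" unfolding Bf_def by simp

lemma finite_set[simp]: "finite (W::'a set)" by simp

lemma main_qf:
  assumes "subsp W"
  shows "\<exists>as. set as \<subseteq> PF - {0} \<and> card W = card (rad W) * p ^ length as \<and>
     (\<forall>y\<in>PF. (\<Sum>x\<in>W. chi (y * Q x)) = of_nat (card (rad W)) * (\<Prod>a\<leftarrow>as. gs (y * a)))"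
  using assms
proof (induction "card W" arbitrary: W rule: less_induct)
  case less
  have W0: "0 \<in> W" and Wadd: "\<And>x z. x \<in> W \<Longrightarrow> z \<in> W \<Longrightarrow> x + z \<in> W"
    and Wsc: "\<And>s x. s \<in> PF \<Longrightarrow> x \<in> W \<Longrightarrow> s * x \<in> W" using less.prems unfolding subsp_def by auto
  show ?case
  proof (cases "\<forall>x\<in>W. Q x = 0")
    case True
    have "rad W = W" unfolding rad_def Bf_def using True Wadd by auto
    moreover have "(\<Sum>x\<in>W. chi (y * Q x)) = of_nat (card W)" for y using True by simp
    ultimately show ?thesis by (intro exI[of _ "[]"]) simp
  next
    case False
    then obtain v where v: "v \<in> W" "Q v \<noteq> 0" by blast
    define a where "a = Q v"
    have aPF: "a \<in> PF" unfolding a_def by (rule Q_PF)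
    have a0: "a \<noteq> 0" using v a_def by simp
    have Bvv: "Bf v v = 2 * a" unfolding a_def by (rule Bf_self)
    have twoa: "2 * a \<noteq> 0" using a0 two_ne0 by simp
    define W' where "W' = {w\<in>W. Bf v w = 0}"
    have sub': "subsp W'" unfolding subsp_def W'_def
      using W0 Wadd Wsc by (auto simp: Bf_add_right Bf_scale_right)
    have vW': "v \<notin> W'" unfolding W'_def using Bvv twoa by simp
    have W'W: "W' \<subseteq> W" unfolding W'_def by auto
    have "W' \<subset> W" using vW' v W'W by blast
    hence cardlt: "card W' < card W" by (simp add: psubset_card_mono)
    define f where "f = (\<lambda>(s, w). s * v + w)"
    define h where "h = (\<lambda>x. (Bf v x / (2 * a), x - (Bf v x / (2 * a)) * v))"
    have bij: "bij_betw f (PF \<times> W') W"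
    proof (rule bij_betwI[where g = h])
      show "f \<in> PF \<times> W' \<rightarrow> W" unfolding f_def W'_def using Wadd Wsc v by auto
      show "h \<in> W \<rightarrow> PF \<times> W'"
      proof
        fix x assume x: "x \<in> W"
        define s where "s = Bf v x / (2 * a)"
        have sPF: "s \<in> PF" unfolding s_def using Bf_PF aPF by (simp add: PF_divide PF_mult)
        have "x - s * v = x + (- s) * v" by simp
        moreover have "Bf v (x + (- s) * v) = 0"
        proof -
          have "Bf v (x + (- s) * v) = Bf v x + (- s) * Bf v v"
            by (simp only: Bf_add_right Bf_scale_right[OF PF_uminus[OF sPF]])
          also have "\<dots> = 0" using Bvv twoa unfolding s_def by simp
          finally show ?thesis .
        qed
        moreover have "x + (- s) * v \<in> W" using Wadd Wsc x v PF_uminus sPF by blast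
        ultimately show "h x \<in> PF \<times> W'" unfolding h_def W'_def s_def[symmetric] using sPF by simp
      qed
      show "h (f sw) = sw" if swin: "sw \<in> PF \<times> W'" for sw
      proof -
        obtain s w where sw: "sw = (s, w)" "s \<in> PF" "w \<in> W'" using swin by (cases sw) auto
        have "Bf v (s * v + w) = s * Bf v v + Bf v w"
          by (simp only: Bf_add_right Bf_scale_right[OF sw(2)])
        also have "\<dots> = s * (2 * a)" using sw(3) Bvv unfolding W'_def by simp
        finally have e0: "Bf v (s * v + w) = s * (2 * a)" .
        have e: "Bf v (s * v + w) / (2 * a) = s" unfolding e0 using twoa by (rule nonzero_mult_div_cancel_right)
        have "h (s * v + w) = (Bf v (s * v + w) / (2 * a), s * v + w - (Bf v (s * v + w) / (2 * a)) * v)"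
          unfolding h_def by (rule refl)
        also have "\<dots> = (s, w)" unfolding e by simp
        finally have hh: "h (s * v + w) = (s, w)" .
        have fsw: "f sw = s * v + w" unfolding sw(1) f_def by simp
        have "h (f sw) = (s, w)" unfolding fsw by (rule hh)
        thus ?thesis unfolding sw(1) .
      qed
      show "f (h x) = x" if "x \<in> W" for x unfolding h_def f_def by simp
    qed
    have cardW: "card W = p * card W'"
      using bij_betw_same_card[OF bij] card_PF by (simp add: card_cartesian_product)
    have radeq: "rad W = rad W'"
    proof
      show "rad W \<subseteq> rad W'"
      proof
        fix x assume "x \<in> rad W"
        hence x: "x \<in> W" "\<And>z. z \<in> W \<Longrightarrow> Bf x z = 0" unfolding rad_def by auto
        have "Bf v x = 0" using x(2)[OF v(1)] Bf_sym[of x v] by simp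
        hence "x \<in> W'" unfolding W'_def using x(1) by simp
        moreover have "\<forall>z\<in>W'. Bf x z = 0" using x(2) W'W by auto
        ultimately show "x \<in> rad W'" unfolding rad_def by simp
      qed
      show "rad W' \<subseteq> rad W"
      proof
        fix x assume x: "x \<in> rad W'"
        hence xW: "x \<in> W" and xv: "Bf v x = 0" and xw: "\<forall>w\<in>W'. Bf x w = 0"
          unfolding rad_def W'_def by auto
        have "Bf x z = 0" if z: "z \<in> W" for z
        proof -
          obtain sw where "sw \<in> PF \<times> W'" "f sw = z" using bij z by (metis bij_betw_iff_bijections)
          then obtain s w where s: "s \<in> PF" and w: "w \<in> W'" and zz: "z = s * v + w"
            unfolding f_def by auto
          have "Bf x z = s * Bf x v + Bf x w" unfolding zz using Bf_add_right Bf_scale_right[OF s] by simp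
          moreover have "Bf x v = 0" using xv Bf_sym[of x v] by simp
          moreover have "Bf x w = 0" using xw w by simp
          ultimately show ?thesis by simp
        qed
        thus "x \<in> rad W" unfolding rad_def using xW by auto
      qed
    qed
    obtain as where as: "set as \<subseteq> PF - {0}" "card W' = card (rad W') * p ^ length as"
      "\<forall>y\<in>PF. (\<Sum>x\<in>W'. chi (y * Q x)) = of_nat (card (rad W')) * (\<Prod>a\<leftarrow>as. gs (y * a))"
      using less.hyps[OF cardlt sub'] by blast
    have sumeq: "(\<Sum>x\<in>W. chi (y * Q x)) = gs (y * a) * (\<Sum>x\<in>W'. chi (y * Q x))" if y: "y \<in> PF" for y
    proof -
      have "(\<Sum>x\<in>W. chi (y * Q x)) = (\<Sum>sw\<in>PF \<times> W'. chi (y * Q (f sw)))"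
        using sum.reindex_bij_betw[OF bij, of "\<lambda>x. chi (y * Q x)"] by simp
      also have "\<dots> = (\<Sum>(s, w)\<in>PF \<times> W'. chi (y * a * s ^ 2) * chi (y * Q w))"
      proof (rule sum.cong, simp)
        fix sw assume "sw \<in> PF \<times> W'"
        then obtain s w where s: "s \<in> PF" and w: "w \<in> W'" and sw: "sw = (s, w)" by auto
        have "Q (f sw) = s ^ 2 * a + Q w"
          using w Q_expand[of "s * v" w] Q_scale[OF s, of v] Bf_scale_left[OF s, of v w]
          unfolding f_def sw W'_def a_def by simp
        hence "chi (y * Q (f sw)) = chi (y * a * s ^ 2 + y * Q w)" by (simp add: algebra_simps)
        also have "\<dots> = chi (y * a * s ^ 2) * chi (y * Q w)"
          using chi_add y aPF s Q_PF by (simp add: PF_mult PF_power)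
        finally show "chi (y * Q (f sw)) = (case sw of (s, w) \<Rightarrow> chi (y * a * s ^ 2) * chi (y * Q w))"
          unfolding sw by simp
      qed
      also have "\<dots> = (\<Sum>s\<in>PF. \<Sum>w\<in>W'. chi (y * a * s ^ 2) * chi (y * Q w))"
        by (rule sum.cartesian_product[symmetric])
      also have "\<dots> = gs (y * a) * (\<Sum>x\<in>W'. chi (y * Q x))"
        by (simp only: gs_def sum_distrib_right) (simp only: sum_distrib_left)
      finally show ?thesis .
    qed
    show ?thesis
    proof (intro exI[of _ "a # as"] conjI ballI)
      show "set (a # as) \<subseteq> PF - {0}" using as(1) aPF a0 by auto
      show "card W = card (rad W) * p ^ length (a # as)" using cardW as(2) radeq by simp
      fix y assume y: "y \<in> PF"
      show "(\<Sum>x\<in>W. chi (y * Q x)) = of_nat (card (rad W)) * (\<Prod>a\<leftarrow>a # as. gs (y * a))"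
        using sumeq[OF y] as(3) y radeq by simp
    qed
  qed
qed

end


context ffield begin

definition PFs :: "'a set" where "PFs = PF - {0}"
definition Sq :: "'a set" where "Sq = {t\<in>PFs. \<exists>b\<in>PF. b ^ 2 = t}"

lemma finite_PFs[simp]: "finite PFs" and finite_Sq[simp]: "finite Sq" by (simp_all)
lemma card_PFs: "card PFs = p - 1" unfolding PFs_def using card_PF by (simp add: card_Diff_singleton)
lemma Sq_sub: "Sq \<subseteq> PFs" unfolding Sq_def by auto

lemma gs_scale: assumes "a \<in> PF" "b \<in> PF" "b \<noteq> 0" shows "gs (a * b ^ 2) = gs a"
proof -
  have bij: "bij_betw (\<lambda>s. b * s) PF PF"
    by (rule bij_betwI[where g = "\<lambda>s. s / b"]) (use assms in \<open>auto simp: PF_mult PF_divide\<close>)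
  have "gs a = (\<Sum>s\<in>PF. chi (a * (b * s) ^ 2))"
    unfolding gs_def using sum.reindex_bij_betw[OF bij, of "\<lambda>s. chi (a * s ^ 2)"] by simp
  also have "\<dots> = gs (a * b ^ 2)" unfolding gs_def by (simp add: power_mult_distrib mult_ac)
  finally show ?thesis by simp
qed

lemma gs_0: "gs 0 = of_nat p" unfolding gs_def by (simp add: card_PF)

lemma fiber2: assumes "b \<in> PF" "b \<noteq> 0" shows "{s\<in>PFs. s ^ 2 = b ^ 2} = {b, - b}"
proof (intro set_eqI iffI)
  have eq: "s ^ 2 = b ^ 2 \<longleftrightarrow> s = b \<or> s = - b" for s :: 'a
    by (rule power2_eq_iff)
  fix s
  { assume "s \<in> {s\<in>PFs. s ^ 2 = b ^ 2}" thus "s \<in> {b, - b}" using eq by blast }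
  { assume "s \<in> {b, - b}"
    hence "s = b \<or> s = - b" by blast
    moreover have "- b \<in> PFs" "b \<in> PFs" using assms PF_uminus unfolding PFs_def by auto
    ultimately show "s \<in> {s\<in>PFs. s ^ 2 = b ^ 2}" by (elim disjE) (simp_all) }
qed

lemma b_ne_minus_b: assumes "(b::'a) \<noteq> 0" shows "b \<noteq> - b"
proof
  assume h: "b = - b"
  have "2 * b = b + b" by (rule mult_2)
  also have "\<dots> = b + - b" using h by (rule arg_cong)
  also have "\<dots> = 0" by (rule right_minus)
  finally show False using two_ne0 assms by simp
qed

lemma card_Sq: "2 * card Sq = p - 1"
proof -
  define A where "A = (\<lambda>t. {s\<in>PFs. s ^ 2 = t})"
  have U: "PFs = (\<Union>t\<in>Sq. A t)"
  proof
    show "PFs \<subseteq> (\<Union>t\<in>Sq. A t)"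
    proof
      fix s assume s: "s \<in> PFs"
      hence "s \<in> PF" "s \<noteq> 0" unfolding PFs_def by auto
      hence "s ^ 2 \<in> PFs" unfolding PFs_def using PF_power by auto
      hence "s ^ 2 \<in> Sq" unfolding Sq_def using \<open>s \<in> PF\<close> by blast
      moreover have "s \<in> A (s ^ 2)" unfolding A_def using s by blast
      ultimately show "s \<in> (\<Union>t\<in>Sq. A t)" by blast
    qed
    show "(\<Union>t\<in>Sq. A t) \<subseteq> PFs" unfolding A_def by blast
  qed
  have c2: "card (A t) = 2" if tS: "t \<in> Sq" for t
  proof -
    obtain b where b: "b \<in> PF" "b ^ 2 = t" using tS unfolding Sq_def by blast
    have "t \<noteq> 0" using tS unfolding Sq_def PFs_def by blast
    hence b0: "b \<noteq> 0" using b by auto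
    have "A t = {b, - b}" unfolding A_def b(2)[symmetric] by (rule fiber2[OF b(1) b0])
    thus ?thesis using b_ne_minus_b[OF b0] by simp
  qed
  have "card PFs = (\<Sum>t\<in>Sq. card (A t))" unfolding U
    by (rule card_UN_disjoint) (auto simp: A_def)
  also have "\<dots> = 2 * card Sq" using c2 by simp
  finally show ?thesis using card_PFs by simp
qed

lemma Sq_mult: assumes "x \<in> Sq" "y \<in> Sq" shows "x * y \<in> Sq"
proof -
  obtain b where b: "b \<in> PF" "b ^ 2 = x" "x \<in> PFs" using assms(1) unfolding Sq_def by blast
  obtain c where c: "c \<in> PF" "c ^ 2 = y" "y \<in> PFs" using assms(2) unfolding Sq_def by blast
  have "(b * c) ^ 2 = x * y" using b c by (simp add: power_mult_distrib)
  moreover have "b * c \<in> PF" using b c PF_mult by blast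
  moreover have "x * y \<in> PFs" using b c unfolding PFs_def by (auto simp: PF_mult)
  ultimately show ?thesis unfolding Sq_def by blast
qed

lemma nonsq_exists: "\<exists>\<nu>. \<nu> \<in> PFs - Sq"
proof (rule ccontr)
  assume "\<not> ?thesis"
  hence "PFs \<subseteq> Sq" by blast
  hence "card PFs \<le> card Sq" by (simp add: card_mono)
  thus False using card_Sq card_PFs p_ge3 by simp
qed

lemma nonsq_form:
  assumes nu: "\<nu> \<in> PFs - Sq" and t: "t \<in> PFs - Sq"
  shows "\<exists>b\<in>PF. b \<noteq> 0 \<and> t = \<nu> * b ^ 2"
proof -
  have nuPF: "\<nu> \<in> PF" "\<nu> \<noteq> 0" using nu unfolding PFs_def by auto
  have sub: "(\<lambda>x. \<nu> * x) ` Sq \<subseteq> PFs - Sq"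
  proof
    fix y assume "y \<in> (\<lambda>x. \<nu> * x) ` Sq"
    then obtain x where x: "x \<in> Sq" "y = \<nu> * x" by auto
    obtain b where b: "b \<in> PF" "b ^ 2 = x" "x \<in> PF" "x \<noteq> 0" using x(1) unfolding Sq_def PFs_def by auto
    have yPF: "y \<in> PFs" using x b nuPF unfolding PFs_def by (auto simp: PF_mult)
    have "y \<notin> Sq"
    proof
      assume "y \<in> Sq"
      then obtain c where c: "c \<in> PF" "c ^ 2 = y" unfolding Sq_def by auto
      have "b \<noteq> 0" using b by auto
      hence "(c / b) ^ 2 = \<nu>" using c b x by (simp add: power_divide)
      moreover have "c / b \<in> PF" using c b PF_divide by auto
      ultimately have "\<nu> \<in> Sq" unfolding Sq_def using nu by auto
      thus False using nu by auto
    qed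
    thus "y \<in> PFs - Sq" using yPF by auto
  qed
  have inj: "inj_on (\<lambda>x. \<nu> * x) Sq" using nuPF by (auto simp: inj_on_def)
  have "card (PFs - Sq) = card Sq" using card_Sq card_PFs Sq_sub by (simp add: card_Diff_subset)
  hence eq: "(\<lambda>x. \<nu> * x) ` Sq = PFs - Sq" using sub card_image[OF inj]
    by (metis card_subset_eq finite_Diff finite_PFs)
  then obtain x where x: "x \<in> Sq" "t = \<nu> * x" using t by (metis imageE)
  then obtain b where "b \<in> PF" "b ^ 2 = x" "x \<noteq> 0" unfolding Sq_def PFs_def by auto
  thus ?thesis using x by auto
qed

lemma gs_Sq: "t \<in> Sq \<Longrightarrow> gs t = gs 1"
proof -
  assume "t \<in> Sq"
  then obtain b where b: "b \<in> PF" "b ^ 2 = t" "b \<noteq> 0" unfolding Sq_def PFs_def by auto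
  thus ?thesis using gs_scale[of 1 b] by simp
qed

lemma sum_gs: "(\<Sum>y\<in>PFs. gs y) = 0"
proof -
  have "(\<Sum>y\<in>PF. gs y) = (\<Sum>s\<in>PF. \<Sum>y\<in>PF. chi (y * s ^ 2))" unfolding gs_def by (rule sum.swap)
  also have "\<dots> = (\<Sum>s\<in>PF. if s ^ 2 = 0 then of_nat p else 0)"
    by (rule sum.cong) (simp_all add: PF_char_sum PF_power)
  also have "\<dots> = of_nat p" by (simp add: sum.delta)
  finally have "(\<Sum>y\<in>PF. gs y) = of_nat p" .
  moreover have "(\<Sum>y\<in>PF. gs y) = gs 0 + (\<Sum>y\<in>PFs. gs y)" unfolding PFs_def
    by (simp add: sum.remove[of PF 0])
  ultimately show ?thesis using gs_0 by simp
qed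

lemma gs_nonsq: assumes "t \<in> PFs - Sq" shows "gs t = - gs 1"
proof -
  obtain \<nu> where nu: "\<nu> \<in> PFs - Sq" using nonsq_exists by blast
  have gsn: "gs y = gs \<nu>" if yN: "y \<in> PFs - Sq" for y
  proof -
    obtain b where "b \<in> PF" "b \<noteq> 0" "y = \<nu> * b ^ 2" using nonsq_form[OF nu yN] by blast
    thus ?thesis using gs_scale[of \<nu> b] nu unfolding PFs_def by simp
  qed
  have "(\<Sum>y\<in>PFs. gs y) = (\<Sum>y\<in>Sq. gs y) + (\<Sum>y\<in>PFs - Sq. gs y)"
    using Sq_sub by (metis add.commute finite_PFs sum.subset_diff)
  also have "\<dots> = of_nat (card Sq) * gs 1 + of_nat (card (PFs - Sq)) * gs \<nu>"
    using gs_Sq gsn by simp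
  also have "card (PFs - Sq) = card Sq" using card_Sq card_PFs Sq_sub by (simp add: card_Diff_subset)
  finally have "of_nat (card Sq) * (gs 1 + gs \<nu>) = 0" using sum_gs by (simp add: algebra_simps)
  moreover have "card Sq \<noteq> 0" using card_Sq p_ge3 by auto
  ultimately have "gs \<nu> = - gs 1" by (simp add: eq_neg_iff_add_eq_0 add.commute)
  thus ?thesis using gsn[OF assms] by simp
qed

definition eps :: "'a \<Rightarrow> complex" where "eps y = (if y \<in> Sq then 1 else -1)"

lemma gs_val: "a \<in> PFs \<Longrightarrow> gs a = eps a * gs 1"
  unfolding eps_def using gs_Sq gs_nonsq by auto

lemma PFs_mult: "x \<in> PFs \<Longrightarrow> y \<in> PFs \<Longrightarrow> x * y \<in> PFs"
  unfolding PFs_def by (auto simp: PF_mult)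

lemma eps_mult: assumes "x \<in> PFs" "y \<in> PFs" shows "eps (x * y) = eps x * eps y"
proof -
  obtain \<nu> where nu: "\<nu> \<in> PFs - Sq" using nonsq_exists by blast
  have nuPF: "\<nu> \<in> PF" "\<nu> \<noteq> 0" using nu unfolding PFs_def by auto
  have sqform: "\<exists>b\<in>PF. b \<noteq> 0 \<and> z = b ^ 2" if zS: "z \<in> Sq" for z
    using zS unfolding Sq_def PFs_def by auto
  have nsq: "z * w \<notin> Sq" if zw0: "z \<in> Sq" "w \<in> PFs - Sq" for z w
  proof
    assume zw: "z * w \<in> Sq"
    obtain b where b: "b \<in> PF" "b \<noteq> 0" "z = b ^ 2" using sqform[OF zw0(1)] by blast
    obtain c where c: "c \<in> PF" "c \<noteq> 0" "z * w = c ^ 2" using sqform[OF zw] by blast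
    have "w = (c / b) ^ 2" using b c by (simp add: power_divide field_simps)
    moreover have "c / b \<in> PF" using b c PF_divide by auto
    moreover have "c / b \<noteq> 0" using b c by auto
    ultimately have "w \<in> Sq" using zw0(2) unfolding Sq_def by auto
    thus False using zw0(2) by auto
  qed
  show ?thesis
  proof (cases "x \<in> Sq")
    case True
    show ?thesis
    proof (cases "y \<in> Sq")
      case True thus ?thesis using \<open>x \<in> Sq\<close> Sq_mult unfolding eps_def by auto
    next
      case False thus ?thesis using \<open>x \<in> Sq\<close> nsq assms unfolding eps_def by auto
    qed
  next
    case False
    show ?thesis
    proof (cases "y \<in> Sq")
      case True thus ?thesis using \<open>x \<notin> Sq\<close> nsq[of y x] assms unfolding eps_def by (auto simp: mult.commute)
    next
      case False
      obtain b where b: "b \<in> PF" "b \<noteq> 0" "x = \<nu> * b ^ 2" using nonsq_form[OF nu] \<open>x \<notin> Sq\<close> assms by blast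
      obtain c where c: "c \<in> PF" "c \<noteq> 0" "y = \<nu> * c ^ 2" using nonsq_form[OF nu] \<open>y \<notin> Sq\<close> assms by blast
      have "x * y = (\<nu> * b * c) ^ 2" using b c by (simp add: power_mult_distrib power2_eq_square mult_ac)
      moreover have "\<nu> * b * c \<in> PF" using nuPF b c by (simp add: PF_mult)
      moreover have "x * y \<in> PFs" using assms PFs_mult by blast
      ultimately have "x * y \<in> Sq" unfolding Sq_def by auto
      thus ?thesis using \<open>x \<notin> Sq\<close> \<open>y \<notin> Sq\<close> unfolding eps_def by simp
    qed
  qed
qed

lemma gs_mult: "y \<in> PFs \<Longrightarrow> a \<in> PFs \<Longrightarrow> gs (y * a) = eps y * gs a"
  using gs_val eps_mult PFs_mult by (simp add: mult_ac)

lemma eps_sq: "eps y ^ 2 = 1" unfolding eps_def by simp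

lemma prod_gs: "set as \<subseteq> PFs \<Longrightarrow> y \<in> PFs \<Longrightarrow> (\<Prod>a\<leftarrow>as. gs (y * a)) = eps y ^ length as * (\<Prod>a\<leftarrow>as. gs a)"
proof (induction as)
  case (Cons a as)
  have a: "a \<in> PFs" and as: "set as \<subseteq> PFs" using Cons.prems by auto
  have "(\<Prod>b\<leftarrow>a # as. gs (y * b)) = gs (y * a) * (\<Prod>b\<leftarrow>as. gs (y * b))" by simp
  also have "\<dots> = (eps y * gs a) * (eps y ^ length as * (\<Prod>b\<leftarrow>as. gs b))"
    using gs_mult[OF Cons.prems(2) a] Cons.IH[OF as Cons.prems(2)] by simp
  also have "\<dots> = eps y ^ length (a # as) * (\<Prod>b\<leftarrow>a # as. gs b)" by (simp add: algebra_simps)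
  finally show ?case .
qed simp

lemma sum_eps: "(\<Sum>y\<in>PFs. eps y) = 0"
proof -
  have "(\<Sum>y\<in>PFs. eps y) = (\<Sum>y\<in>Sq. eps y) + (\<Sum>y\<in>PFs - Sq. eps y)"
    using Sq_sub by (metis add.commute finite_PFs sum.subset_diff)
  also have "\<dots> = of_nat (card Sq) - of_nat (card (PFs - Sq))" unfolding eps_def by simp
  also have "card (PFs - Sq) = card Sq" using card_Sq card_PFs Sq_sub by (simp add: card_Diff_subset)
  finally show ?thesis by simp
qed

lemma sum_eps_pow: "(\<Sum>y\<in>PFs. eps y ^ n) = (if even n then of_nat (p - 1) else 0)"
proof (cases "even n")
  case True
  then obtain k where "n = 2 * k" by blast
  hence "eps y ^ n = 1" for y by (simp add: power_mult eps_sq)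
  thus ?thesis using True card_PFs by simp
next
  case False
  then obtain k where "n = 2 * k + 1" using oddE by blast
  hence "eps y ^ n = eps y" for y by (simp add: power_mult eps_sq)
  thus ?thesis using False sum_eps by simp
qed

lemma gs1_sq: "gs 1 ^ 2 = of_nat p \<or> gs 1 ^ 2 = - of_nat p"
proof -
  have m1: "-1 \<in> PFs" unfolding PFs_def by (simp add: PF_uminus)
  have cnj: "cnj (gs 1) = gs (-1)" unfolding gs_def by (simp add: chi_uminus[symmetric] PF_power)
  define f where "f = (\<lambda>(s::'a, t::'a). (s - t, s + t))"
  have four: "(4::'a) \<noteq> 0"
  proof -
    have "(2::'a) * 2 \<noteq> 0" using two_ne0 by (rule no_zero_divisors) (rule two_ne0)
    thus ?thesis by simp
  qed
  have bij: "bij_betw f (PF \<times> PF) (PF \<times> PF)"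
  proof (rule bij_betwI[where g = "\<lambda>(u, v). ((u + v) / 2, (v - u) / 2)"])
    show "f \<in> PF \<times> PF \<rightarrow> PF \<times> PF" unfolding f_def by (auto simp: PF_add PF_diff)
    show "(\<lambda>(u, v). ((u + v) / 2, (v - u) / 2)) \<in> PF \<times> PF \<rightarrow> PF \<times> PF"
      by (auto simp: PF_add PF_diff PF_divide)
    show "(\<lambda>(u, v). ((u + v) / 2, (v - u) / 2)) (f x) = x" for x
      unfolding f_def using two_ne0 four by (cases x) (simp add: field_simps)
    show "f ((\<lambda>(u, v). ((u + v) / 2, (v - u) / 2)) y) = y" for y
      unfolding f_def using two_ne0 four by (cases y) (simp add: field_simps)
  qed
  have "gs 1 * gs (-1) = (\<Sum>s\<in>PF. \<Sum>t\<in>PF. chi (s ^ 2) * chi (- (t ^ 2)))"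
    unfolding gs_def by (simp add: sum_product)
  also have "\<dots> = (\<Sum>(s, t)\<in>PF \<times> PF. chi ((s - t) * (s + t)))"
    unfolding sum.cartesian_product
  proof (rule sum.cong, simp)
    fix st assume "st \<in> PF \<times> PF"
    then obtain s t where st: "st = (s, t)" "s \<in> PF" "t \<in> PF" by (cases st) auto
    have "chi (s ^ 2) * chi (- (t ^ 2)) = chi (s ^ 2 + - (t ^ 2))"
      using chi_add[of "s ^ 2" "- (t ^ 2)"] st PF_power PF_uminus by simp
    also have "s ^ 2 + - (t ^ 2) = (s - t) * (s + t)" by (simp add: algebra_simps power2_eq_square)
    finally show "(case st of (s, t) \<Rightarrow> chi (s ^ 2) * chi (- (t ^ 2))) = (case st of (s, t) \<Rightarrow> chi ((s - t) * (s + t)))"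
      unfolding st by simp
  qed
  also have "\<dots> = (\<Sum>(u, v)\<in>PF \<times> PF. chi (v * u))"
    using sum.reindex_bij_betw[OF bij, of "\<lambda>(u, v). chi (v * u)"] unfolding f_def
    by (simp add: case_prod_unfold mult.commute)
  also have "\<dots> = (\<Sum>u\<in>PF. \<Sum>v\<in>PF. chi (v * u))" by (simp add: sum.cartesian_product)
  also have "\<dots> = (\<Sum>u\<in>PF. if u = 0 then of_nat p else 0)"
    by (rule sum.cong) (simp_all add: PF_char_sum)
  also have "\<dots> = of_nat p" by (simp add: sum.delta)
  finally have prod: "gs 1 * gs (-1) = of_nat p" .
  show ?thesis
  proof (cases "-1 \<in> Sq")
    case True
    hence "gs (-1) = gs 1" using gs_Sq by simp
    thus ?thesis using prod by (simp add: power2_eq_square)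
  next
    case False
    hence "gs (-1) = - gs 1" using gs_nonsq m1 by simp
    hence "- (gs 1 * gs 1) = of_nat p" using prod by simp
    hence "gs 1 * gs 1 = - of_nat p" by (metis minus_minus)
    thus ?thesis by (simp add: power2_eq_square)
  qed
qed

end


context ffield begin

lemma prod_gs_form: "set as \<subseteq> PFs \<Longrightarrow> \<exists>\<sigma>. (\<sigma> = 1 \<or> \<sigma> = -1) \<and> (\<Prod>a\<leftarrow>as. gs a) = \<sigma> * gs 1 ^ length as"
proof (induction as)
  case Nil thus ?case by (intro exI[of _ 1]) simp
next
  case (Cons a as)
  then obtain \<sigma> where s: "\<sigma> = 1 \<or> \<sigma> = -1" "(\<Prod>a\<leftarrow>as. gs a) = \<sigma> * gs 1 ^ length as" by auto
  have a: "a \<in> PFs" using Cons.prems by auto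
  have "(\<Prod>b\<leftarrow>a # as. gs b) = (eps a * \<sigma>) * gs 1 ^ length (a # as)"
    using s(2) gs_val[OF a] by (simp add: algebra_simps)
  moreover have "eps a * \<sigma> = 1 \<or> eps a * \<sigma> = -1" using s(1) unfolding eps_def by auto
  ultimately show ?case by blast
qed

lemma gs1_pow_even: "\<exists>\<sigma>. (\<sigma> = 1 \<or> \<sigma> = -1) \<and> gs 1 ^ (2 * k) = \<sigma> * of_nat p ^ k"
proof -
  have "gs 1 ^ (2 * k) = (gs 1 ^ 2) ^ k" by (simp add: power_mult)
  thus ?thesis using gs1_sq
  proof (elim disjE)
    assume "gs 1 ^ (2 * k) = (gs 1 ^ 2) ^ k" "gs 1 ^ 2 = of_nat p"
    thus ?thesis by (intro exI[of _ 1]) simp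
  next
    assume "gs 1 ^ (2 * k) = (gs 1 ^ 2) ^ k" "gs 1 ^ 2 = - of_nat p"
    hence "gs 1 ^ (2 * k) = (-1) ^ k * of_nat p ^ k" by (simp add: power_mult_distrib[symmetric])
    moreover have "(-1::complex) ^ k = 1 \<or> (-1::complex) ^ k = -1" by (cases "even k") auto
    ultimately show ?thesis by blast
  qed
qed

end

context qform begin

definition Tq :: complex where "Tq = (\<Sum>y\<in>PFs. \<Sum>x\<in>UNIV. chi (y * Q x))"

lemma Tq_values:
  "\<exists>n. card (UNIV::'a set) = card (rad UNIV) * p ^ n \<and> (odd n \<longrightarrow> Tq = 0) \<and>
     (even n \<longrightarrow> Tq = of_nat (p - 1) * of_nat (card (rad UNIV)) * of_nat p ^ (n div 2) \<or>
                 Tq = - (of_nat (p - 1) * of_nat (card (rad UNIV)) * of_nat p ^ (n div 2)))"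
proof -
  obtain as where as: "set as \<subseteq> PF - {0}" "card (UNIV::'a set) = card (rad UNIV) * p ^ length as"
    "\<forall>y\<in>PF. (\<Sum>x\<in>UNIV. chi (y * Q x)) = of_nat (card (rad UNIV)) * (\<Prod>a\<leftarrow>as. gs (y * a))"
    using main_qf[OF subsp_UNIV] by blast
  have asP: "set as \<subseteq> PFs" using as(1) unfolding PFs_def .
  define R :: complex where "R = of_nat (card (rad UNIV))"
  define n where "n = length as"
  have "Tq = (\<Sum>y\<in>PFs. R * (eps y ^ n * (\<Prod>a\<leftarrow>as. gs a)))"
    unfolding Tq_def R_def n_def
    by (rule sum.cong) (use as(3) prod_gs[OF asP] in \<open>auto simp: PFs_def\<close>)
  also have "\<dots> = R * (\<Prod>a\<leftarrow>as. gs a) * (\<Sum>y\<in>PFs. eps y ^ n)"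
    by (simp add: sum_distrib_left sum_distrib_right algebra_simps)
  also have "\<dots> = R * (\<Prod>a\<leftarrow>as. gs a) * (if even n then of_nat (p - 1) else 0)"
    by (simp add: sum_eps_pow)
  finally have T: "Tq = R * (\<Prod>a\<leftarrow>as. gs a) * (if even n then of_nat (p - 1) else 0)" .
  show ?thesis
  proof (intro exI[of _ n] conjI impI)
    show "card (UNIV::'a set) = card (rad UNIV) * p ^ n" using as(2) n_def by simp
    show "Tq = 0" if "odd n" using T that by simp
    assume ev: "even n"
    then obtain k where k: "n = 2 * k" by blast
    obtain \<sigma> where s: "\<sigma> = 1 \<or> \<sigma> = -1" "(\<Prod>a\<leftarrow>as. gs a) = \<sigma> * gs 1 ^ n"
      using prod_gs_form[OF asP] n_def by blast
    obtain \<tau> where t: "\<tau> = 1 \<or> \<tau> = -1" "gs 1 ^ (2 * k) = \<tau> * of_nat p ^ k"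
      using gs1_pow_even by blast
    have "Tq = (\<sigma> * \<tau>) * (of_nat (p - 1) * R * of_nat p ^ (n div 2))"
      using T ev s(2) t(2) k by simp
    moreover have "\<sigma> * \<tau> = 1 \<or> \<sigma> * \<tau> = -1" using s(1) t(1) by auto
    ultimately show "Tq = of_nat (p - 1) * of_nat (card (rad UNIV)) * of_nat p ^ (n div 2) \<or>
                 Tq = - (of_nat (p - 1) * of_nat (card (rad UNIV)) * of_nat p ^ (n div 2))"
      unfolding R_def by auto
  qed
qed

end


locale tsetup = ffield p m ty for p m and ty :: "'a::{field,finite} itself" +
  fixes k :: nat
  assumes odd_m: "odd m" and m3: "m \<ge> 3" and even_k: "even k" and k1: "k \<ge> 1" and cop: "coprime m k"
begin

definition Qf :: "'a \<Rightarrow> 'a \<Rightarrow> 'a \<Rightarrow> 'a" where "Qf u c x = Tr (u * x ^ 2 + c * x ^ (p ^ k + 1))"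

lemma pow_e: "(x::'a) ^ (p ^ k + 1) = x ^ (p ^ k) * x" by simp

lemma Bexp: "Qf u c (x + z) - Qf u c x - Qf u c z = Tr (2 * u * x * z + c * (x ^ (p ^ k) * z + x * z ^ (p ^ k)))"
proof -
  have "u * (x + z) ^ 2 + c * (x + z) ^ (p ^ k + 1) - (u * x ^ 2 + c * x ^ (p ^ k + 1)) - (u * z ^ 2 + c * z ^ (p ^ k + 1))
      = 2 * u * x * z + c * (x ^ (p ^ k) * z + x * z ^ (p ^ k))"
    unfolding pow_e frob_add by (simp add: algebra_simps power2_eq_square)
  thus ?thesis unfolding Qf_def by (simp add: tr_diff[symmetric])
qed

lemma qf: "qform p m (Qf u c)"
proof (unfold_locales)
  fix x show "Qf u c x \<in> PF" unfolding Qf_def by (rule tr_in_PF)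
next
  fix s x :: 'a assume s: "s \<in> PF"
  have "(s * x) ^ (p ^ k + 1) = s ^ 2 * x ^ (p ^ k + 1)"
    unfolding pow_e using PF_pow_iter[OF s] by (simp add: power_mult_distrib power2_eq_square mult_ac)
  hence "u * (s * x) ^ 2 + c * (s * x) ^ (p ^ k + 1) = s ^ 2 * (u * x ^ 2 + c * x ^ (p ^ k + 1))"
    by (simp add: power_mult_distrib algebra_simps)
  thus "Qf u c (s * x) = s ^ 2 * Qf u c x" unfolding Qf_def using tr_scale PF_power s by simp
next
  fix x y z :: 'a
  show "Qf u c (x + y + z) - Qf u c (x + y) - Qf u c z =
        Qf u c (x + z) - Qf u c x - Qf u c z + (Qf u c (y + z) - Qf u c y - Qf u c z)"
    unfolding Bexp tr_add[symmetric] frob_add by (simp add: algebra_simps)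
qed

definition M :: "'a \<Rightarrow> 'a \<Rightarrow> 'a \<Rightarrow> 'a" where
  "M u c x = c ^ (p ^ k) * x ^ (p ^ (2 * k)) + (2 * u) ^ (p ^ k) * x ^ (p ^ k) + c * x"

lemma Bf_M: "qform.Bf (Qf u c) x z = Tr (z ^ (p ^ k) * M u c x)"
proof -
  have "qform.Bf (Qf u c) x z = Tr (2 * u * x * z + c * (x ^ (p ^ k) * z + x * z ^ (p ^ k)))"
    unfolding qform.Bf_def[OF qf] Bexp ..
  also have "\<dots> = Tr (z * (2 * u * x + c * x ^ (p ^ k))) + Tr (z ^ (p ^ k) * (c * x))"
    unfolding tr_add[symmetric] by (simp add: algebra_simps)
  also have "Tr (z * (2 * u * x + c * x ^ (p ^ k))) = Tr ((z * (2 * u * x + c * x ^ (p ^ k))) ^ (p ^ k))"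
    by (rule tr_frob[symmetric])
  also have "(z * (2 * u * x + c * x ^ (p ^ k))) ^ (p ^ k)
      = z ^ (p ^ k) * ((2 * u) ^ (p ^ k) * x ^ (p ^ k) + c ^ (p ^ k) * x ^ (p ^ (2 * k)))"
  proof -
    have "(x ^ (p ^ k)) ^ (p ^ k) = x ^ (p ^ (2 * k))" by (simp add: power_mult[symmetric] power_add[symmetric] mult_2)
    thus ?thesis by (simp add: power_mult_distrib frob_add mult.assoc)
  qed
  finally show ?thesis unfolding M_def tr_add[symmetric] by (simp add: algebra_simps)
qed

lemma frob_surj: "\<exists>z::'a. z ^ (p ^ k) = w"
proof -
  have "inj (\<lambda>z::'a. z ^ (p ^ k))" by (auto intro: injI frob_inj)
  hence "surj (\<lambda>z::'a. z ^ (p ^ k))" by (simp add: finite_UNIV_inj_surj)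
  thus ?thesis by (metis surjD)
qed

lemma rad_sub: "qform.rad (Qf u c) UNIV \<subseteq> {x. M u c x = 0}"
proof
  fix x assume "x \<in> qform.rad (Qf u c) UNIV"
  hence h: "\<forall>z. Tr (z ^ (p ^ k) * M u c x) = 0" unfolding qform.rad_def[OF qf] Bf_M by auto
  have "\<forall>w. Tr (M u c x * w) = 0"
  proof
    fix w :: 'a
    obtain z where "z ^ (p ^ k) = w" using frob_surj[of w] by (elim exE)
    thus "Tr (M u c x * w) = 0" using h by (metis mult.commute)
  qed
  thus "x \<in> {x. M u c x = 0}" using tr_nondeg by auto
qed

lemma M_c0: "u \<noteq> 0 \<Longrightarrow> {x. M u 0 x = 0} = {0}"
proof -
  assume u: "u \<noteq> 0"
  have "2 * u \<noteq> 0" using u two_ne0 by simp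
  have pk: "p ^ k \<noteq> 0" using p_gt1 by simp
  hence "M u 0 x = 0 \<longleftrightarrow> x = 0" for x unfolding M_def using \<open>2 * u \<noteq> 0\<close> using p_gt1 by (simp add: power_0_left)
  thus ?thesis by auto
qed

lemma fixed_k: "(x::'a) ^ (p ^ k) = x \<Longrightarrow> x \<in> PF"
  using fixed_PF cop by (simp add: coprime_commute)

lemma pow2k: "((x::'a) ^ (p ^ k)) ^ (p ^ k) = x ^ (p ^ (2 * k))"
  by (simp add: power_mult[symmetric] power_add[symmetric] mult_2)

lemma card_fibers:
  fixes f :: "'a \<Rightarrow> 'a" and K E :: "'a set"
  assumes "f ` K \<subseteq> E" "card E \<le> p"
    and fib: "\<And>x x'. x \<in> K \<Longrightarrow> x' \<in> K \<Longrightarrow> f x = f x' \<Longrightarrow> x' \<in> (\<lambda>s. x + s * d) ` PF"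
  shows "card K \<le> p ^ 2"
proof -
  have K: "K = (\<Union>e\<in>f ` K. {x\<in>K. f x = e})" by auto
  have "card K \<le> (\<Sum>e\<in>f ` K. card {x\<in>K. f x = e})"
    by (subst K) (rule card_UN_le, simp)
  also have "\<dots> \<le> (\<Sum>e\<in>f ` K. p)"
  proof (rule sum_mono)
    fix e assume "e \<in> f ` K"
    then obtain x0 where x0: "x0 \<in> K" "e = f x0" by auto
    have "{x\<in>K. f x = e} \<subseteq> (\<lambda>s. x0 + s * d) ` PF" using fib x0 by auto
    hence "card {x\<in>K. f x = e} \<le> card ((\<lambda>s. x0 + s * d) ` PF)" by (simp add: card_mono)
    also have "\<dots> \<le> card PF" by (rule card_image_le) simp
    finally show "card {x\<in>K. f x = e} \<le> p" using card_PF by simp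
  qed
  also have "\<dots> = card (f ` K) * p" by simp
  also have "\<dots> \<le> card E * p" using assms(1) by (simp add: card_mono)
  also have "\<dots> \<le> p * p" using assms(2) by simp
  finally show ?thesis by (simp add: power2_eq_square)
qed

lemma card_E:
  fixes A B :: 'a
  assumes A: "A \<noteq> 0"
  shows "card {w. A * w ^ (p ^ k) + B * w = 0} \<le> p"
proof (cases "\<exists>w0. w0 \<noteq> 0 \<and> A * w0 ^ (p ^ k) + B * w0 = 0")
  case False
  hence "{w. A * w ^ (p ^ k) + B * w = 0} \<subseteq> {0}" by auto
  hence "card {w. A * w ^ (p ^ k) + B * w = 0} \<le> card {0::'a}" by (intro card_mono) simp_all
  thus ?thesis using p_gt1 by simp
next
  case True
  then obtain w0 where w0: "w0 \<noteq> 0" "A * w0 ^ (p ^ k) + B * w0 = 0" by blast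
  have w0s: "w0 ^ (p ^ k) \<noteq> 0" using w0 by simp
  have "{w. A * w ^ (p ^ k) + B * w = 0} \<subseteq> (\<lambda>s. s * w0) ` PF"
  proof
    fix w assume "w \<in> {w. A * w ^ (p ^ k) + B * w = 0}"
    hence w: "A * w ^ (p ^ k) + B * w = 0" by simp
    have "A * (w ^ (p ^ k) * w0) = A * (w * w0 ^ (p ^ k))"
    proof -
      have "A * (w ^ (p ^ k) * w0) = (A * w ^ (p ^ k)) * w0" by (simp add: mult.assoc)
      also have "A * w ^ (p ^ k) = - (B * w)" using w by (simp add: eq_neg_iff_add_eq_0)
      also have "- (B * w) * w0 = w * (- (B * w0))" by (simp add: algebra_simps)
      also have "- (B * w0) = A * w0 ^ (p ^ k)" using w0(2) by (metis add.commute neg_eq_iff_add_eq_0)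
      also have "w * (A * w0 ^ (p ^ k)) = A * (w * w0 ^ (p ^ k))" by (simp add: mult_ac)
      finally show ?thesis .
    qed
    hence e: "w ^ (p ^ k) * w0 = w * w0 ^ (p ^ k)" using A by simp
    have "(w / w0) ^ (p ^ k) = w / w0"
      using e w0 w0s by (simp add: power_divide field_simps)
    hence "w / w0 \<in> PF" by (rule fixed_k)
    moreover have "w = (w / w0) * w0" using w0 by simp
    ultimately show "w \<in> (\<lambda>s. s * w0) ` PF" by blast
  qed
  hence "card {w. A * w ^ (p ^ k) + B * w = 0} \<le> card ((\<lambda>s. s * w0) ` PF)" by (simp add: card_mono)
  also have "\<dots> \<le> card PF" by (rule card_image_le) simp
  finally show ?thesis using card_PF by simp
qed

lemma card_M:
  assumes c: "c \<noteq> 0"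
  shows "card {x. M u c x = 0} \<le> p ^ 2"
proof (cases "\<exists>x1. x1 \<noteq> 0 \<and> M u c x1 = 0")
  case False
  hence "{x. M u c x = 0} \<subseteq> {0}" by auto
  hence "card {x. M u c x = 0} \<le> card {0::'a}" by (intro card_mono) simp_all
  moreover have "1 \<le> p ^ 2" using p_gt1 by simp
  ultimately show ?thesis by simp
next
  case True
  then obtain x1 where x1: "x1 \<noteq> 0" "M u c x1 = 0" by blast
  define a where "a = (2 * u) ^ (p ^ k)"
  define A where "A = c ^ (p ^ k) * x1 ^ (p ^ (2 * k))"
  define B where "B = A + a * x1 ^ (p ^ k)"
  have A0: "A \<noteq> 0" unfolding A_def using c x1 by simp
  have cx1: "c * x1 = - (A + a * x1 ^ (p ^ k))"
    using x1(2) unfolding M_def A_def a_def by (simp add: eq_neg_iff_add_eq_0 algebra_simps)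
  define f where "f = (\<lambda>x. (x / x1) ^ (p ^ k) - x / x1)"
  show ?thesis
  proof (rule card_fibers[where f = f and E = "{w. A * w ^ (p ^ k) + B * w = 0}" and d = x1])
    show "card {w. A * w ^ (p ^ k) + B * w = 0} \<le> p" by (rule card_E[OF A0])
    show "f ` {x. M u c x = 0} \<subseteq> {w. A * w ^ (p ^ k) + B * w = 0}"
    proof
      fix e assume "e \<in> f ` {x. M u c x = 0}"
      then obtain x where x: "M u c x = 0" "e = f x" by auto
      define y where "y = x / x1"
      have xy: "x = x1 * y" unfolding y_def using x1 by simp
      have "0 = M u c (x1 * y)" using x xy by simp
      also have "\<dots> = A * y ^ (p ^ (2 * k)) + a * x1 ^ (p ^ k) * y ^ (p ^ k) + c * x1 * y"
        unfolding M_def A_def a_def by (simp add: power_mult_distrib algebra_simps)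
      also have "\<dots> = A * y ^ (p ^ (2 * k)) + a * x1 ^ (p ^ k) * y ^ (p ^ k) + (- (A + a * x1 ^ (p ^ k))) * y"
        by (simp only: cx1)
      also have "\<dots> = A * (y ^ (p ^ (2 * k)) - y) + a * x1 ^ (p ^ k) * (y ^ (p ^ k) - y)"
        by (simp add: algebra_simps)
      also have "y ^ (p ^ (2 * k)) - y = (y ^ (p ^ k) - y) ^ (p ^ k) + (y ^ (p ^ k) - y)"
        by (simp add: frob_diff pow2k)
      finally have "A * (y ^ (p ^ k) - y) ^ (p ^ k) + B * (y ^ (p ^ k) - y) = 0"
        unfolding B_def by (simp add: algebra_simps)
      moreover have "e = y ^ (p ^ k) - y" unfolding x(2) f_def y_def ..
      ultimately show "e \<in> {w. A * w ^ (p ^ k) + B * w = 0}" by simp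
    qed
    fix x x' assume "x \<in> {x. M u c x = 0}" "x' \<in> {x. M u c x = 0}" "f x = f x'"
    hence "(x' / x1 - x / x1) ^ (p ^ k) = x' / x1 - x / x1"
      unfolding f_def frob_diff by (simp add: algebra_simps)
    hence "x' / x1 - x / x1 \<in> PF" by (rule fixed_k)
    moreover have "x' = x + (x' / x1 - x / x1) * x1" using x1 by (simp add: algebra_simps)
    ultimately show "x' \<in> (\<lambda>s. x + s * x1) ` PF" by blast
  qed
qed

definition T :: "'a \<Rightarrow> 'a \<Rightarrow> complex" where
  "T u c = (\<Sum>y\<in>PFs. \<Sum>x\<in>UNIV. chi (y * Qf u c x))"

definition hh :: complex where "hh = of_nat (p - 1) * of_nat p ^ ((m + 1) div 2)"

lemma T_eq: "T u c = qform.Tq p (Qf u c)"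
  unfolding T_def qform.Tq_def[OF qf] ..

lemma card_pos: "card (UNIV::'a set) > 0" by (rule finite_UNIV_card_ge_0) simp

lemma R_form:
  assumes "card (UNIV::'a set) = R * p ^ n"
  shows "n \<le> m \<and> R = p ^ (m - n)"
proof -
  have Rpos: "R > 0" using assms card_pos by (metis gr0I mult_is_0)
  have "p ^ n \<le> R * p ^ n" using Rpos by simp
  hence "p ^ n \<le> p ^ m" using assms card_UNIV by simp
  hence nm: "n \<le> m" by (rule power_le_imp_le_exp[OF p_gt1])
  have "R * p ^ n = p ^ (m - n) * p ^ n" using assms card_UNIV nm by (simp add: power_add[symmetric])
  hence "R = p ^ (m - n)" using p_gt1 by simp
  thus ?thesis using nm by simp
qed

lemma T00: "T 0 0 = of_nat (p - 1) * of_nat (p ^ m)"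
  unfolding T_def Qf_def using card_PFs card_UNIV by simp

lemma T_u0: assumes "u \<noteq> 0" shows "T u 0 = 0"
proof -
  interpret qform p m ty "Qf u 0" by (rule qf)
  obtain n where n: "card (UNIV::'a set) = card (rad UNIV) * p ^ n" "odd n \<longrightarrow> Tq = 0"
    using Tq_values by blast
  have "card (rad UNIV) \<le> card {x. M u 0 x = 0}" using rad_sub by (simp add: card_mono)
  hence "card (rad UNIV) \<le> 1" using M_c0[OF assms] by simp
  moreover have "card (rad UNIV) = p ^ (m - n)" "n \<le> m" using R_form[OF n(1)] by auto
  ultimately have "p ^ (m - n) \<le> p ^ 0" by simp
  hence "m - n \<le> 0" by (rule power_le_imp_le_exp[OF p_gt1])
  hence "m - n = 0" by simp
  hence "n = m" using \<open>n \<le> m\<close> by simp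
  hence "Tq = 0" using n(2) odd_m by simp
  thus ?thesis using T_eq by simp
qed

lemma T_c: assumes "c \<noteq> 0" shows "T u c = 0 \<or> T u c = hh \<or> T u c = - hh"
proof -
  interpret qform p m ty "Qf u c" by (rule qf)
  obtain n where n: "card (UNIV::'a set) = card (rad UNIV) * p ^ n" "odd n \<longrightarrow> Tq = 0"
    "even n \<longrightarrow> Tq = of_nat (p - 1) * of_nat (card (rad UNIV)) * of_nat p ^ (n div 2) \<or>
                 Tq = - (of_nat (p - 1) * of_nat (card (rad UNIV)) * of_nat p ^ (n div 2))"
    using Tq_values by blast
  have "card (rad UNIV) \<le> card {x. M u c x = 0}" using rad_sub by (simp add: card_mono)
  hence R2: "card (rad UNIV) \<le> p ^ 2" using card_M[OF assms, of u] by linarith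
  have R: "card (rad UNIV) = p ^ (m - n)" and nm: "n \<le> m" using R_form[OF n(1)] by auto
  have "p ^ (m - n) \<le> p ^ 2" using R2 R by simp
  hence "m - n \<le> 2" by (rule power_le_imp_le_exp[OF p_gt1])
  show ?thesis
  proof (cases "even n")
    case False thus ?thesis using n(2) T_eq by simp
  next
    case True
    hence "odd (m - n)" using odd_m nm by simp
    hence mn: "m - n = 1" using \<open>m - n \<le> 2\<close> by presburger
    hence "card (rad UNIV) = p" using R by simp
    moreover have "n div 2 = (m - 1) div 2" using mn by simp
    moreover have "(m + 1) div 2 = Suc ((m - 1) div 2)" using odd_m m3 by presburger
    ultimately have "of_nat (p - 1) * of_nat (card (rad UNIV)) * of_nat p ^ (n div 2) = hh"
      unfolding hh_def by (simp add: mult_ac)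
    thus ?thesis using n(3) True T_eq by auto
  qed
qed

end


context tsetup begin

lemma sqrt_PF: assumes "(t::'a) ^ 2 \<in> PF" shows "t \<in> PF"
proof -
  have "(t ^ (p ^ k)) ^ 2 = t ^ 2"
    using PF_pow_iter[OF assms, of k] by (simp add: power_mult[symmetric] mult.commute)
  hence "t ^ (p ^ k) = t \<or> t ^ (p ^ k) = - t" by (simp add: power2_eq_iff)
  thus ?thesis
  proof
    assume "t ^ (p ^ k) = t" thus ?thesis by (rule fixed_k)
  next
    assume h: "t ^ (p ^ k) = - t"
    have "t ^ (p ^ (2 * k)) = (t ^ (p ^ k)) ^ (p ^ k)" by (simp add: pow2k)
    also have "\<dots> = t" unfolding h frob_minus h by simp
    finally have "t ^ (p ^ (2 * k)) = t" .
    moreover have "coprime (2 * k) m"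
      using cop odd_m by (simp add: coprime_commute coprime_mult_left_iff)
    ultimately show ?thesis by (rule fixed_PF)
  qed
qed

lemma chiQ: assumes "y \<in> PF"
  shows "chi (y * Qf u c x) = chi (Tr ((y * x ^ 2) * u)) * chi (Tr (y * c * x ^ (p ^ k + 1)))"
proof -
  have "y * Qf u c x = Tr ((y * x ^ 2) * u) + Tr (y * c * x ^ (p ^ k + 1))"
    unfolding Qf_def tr_scale[OF assms, symmetric] tr_add[symmetric] by (simp add: algebra_simps)
  thus ?thesis using chi_add tr_in_PF by simp
qed

lemma PFs_ne0: "y \<in> PFs \<Longrightarrow> y \<noteq> 0" and PFs_PF: "y \<in> PFs \<Longrightarrow> y \<in> PF"
  unfolding PFs_def by auto

lemma moment1: "(\<Sum>u\<in>UNIV. T u c) = of_nat (p - 1) * of_nat (p ^ m)"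
proof -
  have "(\<Sum>u\<in>UNIV. T u c) = (\<Sum>u\<in>UNIV. \<Sum>y\<in>PFs. \<Sum>x\<in>UNIV. chi (y * Qf u c x))"
    unfolding T_def ..
  also have "\<dots> = (\<Sum>y\<in>PFs. \<Sum>u\<in>UNIV. \<Sum>x\<in>UNIV. chi (y * Qf u c x))" by (rule sum.swap)
  also have "\<dots> = (\<Sum>y\<in>PFs. \<Sum>x\<in>UNIV. \<Sum>u\<in>UNIV. chi (y * Qf u c x))"
    by (rule sum.cong[OF refl], rule sum.swap)
  also have "\<dots> = (\<Sum>y\<in>PFs. \<Sum>x\<in>UNIV. chi (Tr (y * c * x ^ (p ^ k + 1))) *
                       (if y * x ^ 2 = 0 then of_nat (card (UNIV::'a set)) else 0))"
  proof (intro sum.cong refl)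
    fix y x assume y: "y \<in> PFs"
    have "(\<Sum>u\<in>UNIV. chi (y * Qf u c x)) = (\<Sum>u\<in>UNIV. chi (Tr ((y * x ^ 2) * u))) * chi (Tr (y * c * x ^ (p ^ k + 1)))"
      using chiQ[OF PFs_PF[OF y]] by (simp add: sum_distrib_right)
    thus "(\<Sum>u\<in>UNIV. chi (y * Qf u c x)) = chi (Tr (y * c * x ^ (p ^ k + 1))) *
                       (if y * x ^ 2 = 0 then of_nat (card (UNIV::'a set)) else 0)"
      unfolding char_sum by simp
  qed
  also have "\<dots> = (\<Sum>y\<in>PFs. of_nat (p ^ m))"
  proof (rule sum.cong[OF refl])
    fix y assume y: "y \<in> PFs"
    have "(\<Sum>x\<in>UNIV. chi (Tr (y * c * x ^ (p ^ k + 1))) *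
                       (if y * x ^ 2 = 0 then of_nat (card (UNIV::'a set)) else 0))
        = (\<Sum>x\<in>UNIV. if x = (0::'a) then of_nat (p ^ m) else 0)"
    proof (rule sum.cong[OF refl])
      fix x :: 'a
      show "chi (Tr (y * c * x ^ (p ^ k + 1))) * (if y * x ^ 2 = 0 then of_nat (card (UNIV::'a set)) else 0)
          = (if x = 0 then of_nat (p ^ m) else 0)"
        using PFs_ne0[OF y] card_UNIV by (cases "x = 0") auto
    qed
    also have "\<dots> = of_nat (p ^ m)" by simp
    finally show "(\<Sum>x\<in>UNIV. chi (Tr (y * c * x ^ (p ^ k + 1))) *
                       (if y * x ^ 2 = 0 then of_nat (card (UNIV::'a set)) else 0)) = of_nat (p ^ m)" .
  qed
  also have "\<dots> = of_nat (p - 1) * of_nat (p ^ m)" using card_PFs by simp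
  finally show ?thesis .
qed

end


lemma swap_in2: "(\<Sum>u\<in>U. \<Sum>a\<in>A. \<Sum>b\<in>B. f u a b) = (\<Sum>a\<in>A. \<Sum>b\<in>B. \<Sum>u\<in>U. (f u a b :: complex))"
proof -
  have "(\<Sum>u\<in>U. \<Sum>a\<in>A. \<Sum>b\<in>B. f u a b) = (\<Sum>a\<in>A. \<Sum>u\<in>U. \<Sum>b\<in>B. f u a b)" by (rule sum.swap)
  also have "\<dots> = (\<Sum>a\<in>A. \<Sum>b\<in>B. \<Sum>u\<in>U. f u a b)" by (rule sum.cong[OF refl], rule sum.swap)
  finally show ?thesis .
qed

lemma swap_in4: "(\<Sum>u\<in>U. \<Sum>a\<in>A. \<Sum>b\<in>B. \<Sum>c\<in>C. \<Sum>d\<in>D. f u a b c d) =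
   (\<Sum>a\<in>A. \<Sum>b\<in>B. \<Sum>c\<in>C. \<Sum>d\<in>D. \<Sum>u\<in>U. (f u a b c d :: complex))"
proof -
  have "(\<Sum>u\<in>U. \<Sum>a\<in>A. \<Sum>b\<in>B. \<Sum>c\<in>C. \<Sum>d\<in>D. f u a b c d) =
     (\<Sum>a\<in>A. \<Sum>b\<in>B. \<Sum>u\<in>U. \<Sum>c\<in>C. \<Sum>d\<in>D. f u a b c d)" by (rule swap_in2)
  also have "\<dots> = (\<Sum>a\<in>A. \<Sum>b\<in>B. \<Sum>c\<in>C. \<Sum>d\<in>D. \<Sum>u\<in>U. f u a b c d)"
    by (intro sum.cong refl swap_in2)
  finally show ?thesis .
qed

context tsetup begin

lemma chi_tr2: "chi (Tr a) * chi (Tr b) = chi (Tr (a + b))"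
  using chi_add[OF tr_in_PF tr_in_PF, of a b] tr_add by simp

lemma e_claim:
  assumes y: "y \<in> PFs" and y': "y' \<in> PFs" and D: "y * x ^ 2 + y' * x' ^ 2 = 0"
  shows "y * x ^ (p ^ k + 1) + y' * x' ^ (p ^ k + 1) = 0"
proof (cases "x = 0")
  case True
  hence "y' * x' ^ 2 = 0" using D by simp
  hence "x' = 0" using PFs_ne0[OF y'] by simp
  thus ?thesis using True by simp
next
  case False
  define \<tau> where "\<tau> = x' / x"
  have y0: "y' \<noteq> 0" using PFs_ne0[OF y'] .
  have yx: "y' * x' ^ 2 = - (y * x ^ 2)" using D by (simp add: eq_neg_iff_add_eq_0 add.commute)
  have t2: "\<tau> ^ 2 = - y / y'" unfolding \<tau>_def using False y0 yx
    by (simp add: power_divide field_simps)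
  have "\<tau> ^ 2 \<in> PF" unfolding t2 using PFs_PF[OF y] PFs_PF[OF y'] by (simp add: PF_divide PF_uminus)
  hence tP: "\<tau> \<in> PF" by (rule sqrt_PF)
  have x': "x' = \<tau> * x" unfolding \<tau>_def using False by simp
  have "x' ^ (p ^ k + 1) = \<tau> ^ 2 * x ^ (p ^ k + 1)"
    unfolding x' pow_e using PF_pow_iter[OF tP, of k] by (simp add: power_mult_distrib power2_eq_square mult_ac)
  hence "y * x ^ (p ^ k + 1) + y' * x' ^ (p ^ k + 1) = (y + y' * \<tau> ^ 2) * x ^ (p ^ k + 1)"
    by (simp add: algebra_simps)
  also have "y + y' * \<tau> ^ 2 = 0" unfolding t2 using y0 by simp
  finally show ?thesis by simp
qed

lemma chi2: assumes "y \<in> PF" "y' \<in> PF"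
  shows "chi (y * Qf u c x) * chi (y' * Qf u c x') =
     chi (Tr ((y * x ^ 2 + y' * x' ^ 2) * u)) * chi (Tr (c * (y * x ^ (p ^ k + 1) + y' * x' ^ (p ^ k + 1))))"
proof -
  have "chi (y * Qf u c x) * chi (y' * Qf u c x') =
     (chi (Tr ((y * x ^ 2) * u)) * chi (Tr ((y' * x' ^ 2) * u))) *
     (chi (Tr (y * c * x ^ (p ^ k + 1))) * chi (Tr (y' * c * x' ^ (p ^ k + 1))))"
    unfolding chiQ[OF assms(1)] chiQ[OF assms(2)] by (simp add: mult_ac)
  also have "\<dots> = chi (Tr ((y * x ^ 2 + y' * x' ^ 2) * u)) * chi (Tr (c * (y * x ^ (p ^ k + 1) + y' * x' ^ (p ^ k + 1))))"
    unfolding chi_tr2 by (simp add: algebra_simps)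
  finally show ?thesis .
qed

lemma moment2_a: "(\<Sum>u\<in>UNIV. T u c * T u c) =
   of_nat (p ^ m) * (\<Sum>y\<in>PFs. \<Sum>y'\<in>PFs. \<Sum>x\<in>UNIV. \<Sum>x'\<in>UNIV.
       if y * x ^ 2 + y' * x' ^ 2 = 0 then 1 else 0)"
proof -
  have "(\<Sum>u\<in>UNIV. T u c * T u c) = (\<Sum>u\<in>UNIV. \<Sum>y\<in>PFs. \<Sum>y'\<in>PFs. \<Sum>x\<in>UNIV. \<Sum>x'\<in>UNIV.
          chi (y * Qf u c x) * chi (y' * Qf u c x'))"
    unfolding T_def by (simp add: sum_product)
  also have "\<dots> = (\<Sum>y\<in>PFs. \<Sum>y'\<in>PFs. \<Sum>x\<in>UNIV. \<Sum>x'\<in>UNIV. \<Sum>u\<in>UNIV.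
          chi (y * Qf u c x) * chi (y' * Qf u c x'))" by (rule swap_in4)
  also have "\<dots> = (\<Sum>y\<in>PFs. \<Sum>y'\<in>PFs. \<Sum>x\<in>UNIV. \<Sum>x'\<in>UNIV.
          of_nat (p ^ m) * (if y * x ^ 2 + y' * x' ^ 2 = 0 then 1 else 0))"
  proof (intro sum.cong refl)
    fix y y' x x' assume y: "y \<in> PFs" and y': "y' \<in> PFs"
    have "(\<Sum>u\<in>UNIV. chi (y * Qf u c x) * chi (y' * Qf u c x')) =
       (\<Sum>u\<in>UNIV. chi (Tr ((y * x ^ 2 + y' * x' ^ 2) * u))) * chi (Tr (c * (y * x ^ (p ^ k + 1) + y' * x' ^ (p ^ k + 1))))"
      unfolding chi2[OF PFs_PF[OF y] PFs_PF[OF y']] by (simp add: sum_distrib_right)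
    also have "\<dots> = of_nat (p ^ m) * (if y * x ^ 2 + y' * x' ^ 2 = 0 then 1 else 0)"
      unfolding char_sum using e_claim[OF y y'] card_UNIV by auto
    finally show "(\<Sum>u\<in>UNIV. chi (y * Qf u c x) * chi (y' * Qf u c x')) =
       of_nat (p ^ m) * (if y * x ^ 2 + y' * x' ^ 2 = 0 then 1 else 0)" .
  qed
  also have "\<dots> = of_nat (p ^ m) * (\<Sum>y\<in>PFs. \<Sum>y'\<in>PFs. \<Sum>x\<in>UNIV. \<Sum>x'\<in>UNIV.
       if y * x ^ 2 + y' * x' ^ 2 = 0 then 1 else 0)"
    by (simp add: sum_distrib_left)
  finally show ?thesis .
qed

lemma sum_if_const: "(\<Sum>x\<in>(UNIV::'a set). if P x then a else 0) = of_nat (card {x. P x}) * (a::complex)"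
  by (simp add: sum.If_cases)

lemma sq_equiv:
  assumes y: "y \<in> PFs" and x': "x' \<noteq> 0"
  shows "- (y * x ^ 2) / x' ^ 2 \<in> PFs \<longleftrightarrow> x / x' \<in> PFs"
proof
  assume t: "- (y * x ^ 2) / x' ^ 2 \<in> PFs"
  have "(x / x') ^ 2 = - (- (y * x ^ 2) / x' ^ 2) / y" using PFs_ne0[OF y] x'
    by (simp add: power_divide field_simps)
  moreover have "- (- (y * x ^ 2) / x' ^ 2) / y \<in> PF"
    by (rule PF_divide[OF PF_uminus[OF PFs_PF[OF t]] PFs_PF[OF y]])
  ultimately have sq: "(x / x') ^ 2 \<in> PF" by simp
  have "- (y * x ^ 2) / x' ^ 2 \<noteq> 0" using PFs_ne0[OF t] .
  hence "x \<noteq> 0" by auto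
  hence "x / x' \<noteq> 0" using x' by simp
  thus "x / x' \<in> PFs" using sqrt_PF[OF sq] unfolding PFs_def by simp
next
  assume t: "x / x' \<in> PFs"
  have "- (y * x ^ 2) / x' ^ 2 = (- y) * (x / x') ^ 2" by (simp add: power_divide)
  moreover have "(- y) * (x / x') ^ 2 \<in> PF" using PFs_PF[OF t] PFs_PF[OF y] by (simp add: PF_mult PF_power PF_uminus)
  moreover have "(- y) * (x / x') ^ 2 \<noteq> 0" using PFs_ne0[OF t] PFs_ne0[OF y] by simp
  ultimately show "- (y * x ^ 2) / x' ^ 2 \<in> PFs" unfolding PFs_def by simp
qed

lemma cnt0: "(\<Sum>y\<in>PFs. \<Sum>y'\<in>PFs. if y * x ^ 2 + y' * (0::'a) ^ 2 = 0 then 1 else 0) =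
   (if x = 0 then of_nat ((p - 1) * (p - 1)) else (0::complex))"
proof (cases "x = 0")
  case True thus ?thesis using card_PFs by simp
next
  case False
  have "(\<Sum>y\<in>PFs. \<Sum>y'\<in>PFs. if y * x ^ 2 + y' * (0::'a) ^ 2 = 0 then 1 else (0::complex)) = 0"
    by (intro sum.neutral ballI) (use False PFs_ne0 in auto)
  thus ?thesis using False by simp
qed

lemma cnt1: assumes x': "x' \<noteq> 0"
  shows "(\<Sum>y\<in>PFs. \<Sum>y'\<in>PFs. if y * x ^ 2 + y' * x' ^ 2 = 0 then 1 else 0) =
   (if x / x' \<in> PFs then of_nat (p - 1) else (0::complex))"
proof -
  have "(\<Sum>y\<in>PFs. \<Sum>y'\<in>PFs. if y * x ^ 2 + y' * x' ^ 2 = 0 then 1 else (0::complex)) =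
     (\<Sum>y\<in>PFs. if x / x' \<in> PFs then 1 else 0)"
  proof (rule sum.cong[OF refl])
    fix y assume y: "y \<in> PFs"
    have eq: "(y * x ^ 2 + y' * x' ^ 2 = 0) = (y' = - (y * x ^ 2) / x' ^ 2)" for y'
      using x' by (auto simp: field_simps eq_neg_iff_add_eq_0)
    have "(\<Sum>y'\<in>PFs. if y * x ^ 2 + y' * x' ^ 2 = 0 then 1 else (0::complex)) =
        (\<Sum>y'\<in>PFs. if y' = - (y * x ^ 2) / x' ^ 2 then 1 else 0)" unfolding eq ..
    also have "\<dots> = (if - (y * x ^ 2) / x' ^ 2 \<in> PFs then 1 else 0)" by (simp add: sum.delta)
    also have "\<dots> = (if x / x' \<in> PFs then 1 else 0)" using sq_equiv[OF y x'] by simp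
    finally show "(\<Sum>y'\<in>PFs. if y * x ^ 2 + y' * x' ^ 2 = 0 then 1 else (0::complex)) =
        (if x / x' \<in> PFs then 1 else 0)" .
  qed
  also have "\<dots> = (if x / x' \<in> PFs then of_nat (p - 1) else 0)" using card_PFs by simp
  finally show ?thesis .
qed

lemma card_ratio: assumes x': "x' \<noteq> (0::'a)" shows "card {x. x / x' \<in> PFs} = p - 1"
proof -
  have "{x. x / x' \<in> PFs} = (\<lambda>s. s * x') ` PFs"
  proof (intro set_eqI iffI)
    fix x assume "x \<in> {x. x / x' \<in> PFs}"
    moreover have "x = (x / x') * x'" using x' by simp
    ultimately show "x \<in> (\<lambda>s. s * x') ` PFs" by blast
  qed (use x' in auto)
  moreover have "inj_on (\<lambda>s. s * x') PFs" using x' by (auto simp: inj_on_def)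
  ultimately show ?thesis using card_PFs by (simp add: card_image)
qed

lemma count_N: "(\<Sum>y\<in>PFs. \<Sum>y'\<in>PFs. \<Sum>x\<in>UNIV. \<Sum>x'\<in>UNIV.
       if y * x ^ 2 + y' * x' ^ 2 = 0 then 1 else 0) = (of_nat ((p - 1) * (p - 1) * p ^ m) :: complex)"
proof -
  let ?f = "\<lambda>y y' x x'. if y * x ^ 2 + y' * x' ^ 2 = 0 then 1 else (0::complex)"
  have "(\<Sum>y\<in>PFs. \<Sum>y'\<in>PFs. \<Sum>x\<in>UNIV. \<Sum>x'\<in>UNIV. ?f y y' x x') =
        (\<Sum>y\<in>PFs. \<Sum>x\<in>UNIV. \<Sum>y'\<in>PFs. \<Sum>x'\<in>UNIV. ?f y y' x x')"
    by (rule sum.cong[OF refl], rule sum.swap)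
  also have "\<dots> = (\<Sum>x\<in>UNIV. \<Sum>y\<in>PFs. \<Sum>y'\<in>PFs. \<Sum>x'\<in>UNIV. ?f y y' x x')" by (rule sum.swap)
  also have "\<dots> = (\<Sum>x\<in>UNIV. \<Sum>y\<in>PFs. \<Sum>x'\<in>UNIV. \<Sum>y'\<in>PFs. ?f y y' x x')"
    by (intro sum.cong refl sum.swap)
  also have "\<dots> = (\<Sum>x\<in>UNIV. \<Sum>x'\<in>UNIV. \<Sum>y\<in>PFs. \<Sum>y'\<in>PFs. ?f y y' x x')"
    by (rule sum.cong[OF refl], rule sum.swap)
  also have "\<dots> = (\<Sum>x\<in>UNIV. (if x = 0 then of_nat ((p - 1) * (p - 1)) else 0) +
        (\<Sum>x'\<in>UNIV - {0}. if x / x' \<in> PFs then of_nat (p - 1) else 0))"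
  proof (rule sum.cong[OF refl])
    fix x :: 'a
    have "(\<Sum>x'\<in>UNIV. \<Sum>y\<in>PFs. \<Sum>y'\<in>PFs. ?f y y' x x') =
       (\<Sum>y\<in>PFs. \<Sum>y'\<in>PFs. ?f y y' x 0) + (\<Sum>x'\<in>UNIV - {0}. \<Sum>y\<in>PFs. \<Sum>y'\<in>PFs. ?f y y' x x')"
      by (simp add: sum.remove[of UNIV 0])
    also have "\<dots> = (if x = 0 then of_nat ((p - 1) * (p - 1)) else 0) +
        (\<Sum>x'\<in>UNIV - {0}. if x / x' \<in> PFs then of_nat (p - 1) else 0)"
      unfolding cnt0 by (intro arg_cong2[where f = "(+)"] refl sum.cong) (simp_all add: cnt1)
    finally show "(\<Sum>x'\<in>UNIV. \<Sum>y\<in>PFs. \<Sum>y'\<in>PFs. ?f y y' x x') =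
       (if x = 0 then of_nat ((p - 1) * (p - 1)) else 0) +
        (\<Sum>x'\<in>UNIV - {0}. if x / x' \<in> PFs then of_nat (p - 1) else 0)" .
  qed
  also have "\<dots> = of_nat ((p - 1) * (p - 1)) +
       (\<Sum>x'\<in>UNIV - {0}. \<Sum>x\<in>UNIV. if x / x' \<in> PFs then of_nat (p - 1) else 0)"
  proof -
    have "(\<Sum>x\<in>UNIV. (if x = 0 then of_nat ((p - 1) * (p - 1)) else 0) +
        (\<Sum>x'\<in>UNIV - {0}. if x / x' \<in> PFs then of_nat (p - 1) else (0::complex))) =
        (\<Sum>x\<in>UNIV. if x = (0::'a) then of_nat ((p - 1) * (p - 1)) else 0) +
        (\<Sum>x\<in>UNIV. \<Sum>x'\<in>UNIV - {0}. if x / x' \<in> PFs then of_nat (p - 1) else (0::complex))"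
      by (rule sum.distrib)
    also have "(\<Sum>x\<in>UNIV. \<Sum>x'\<in>UNIV - {0}. if x / x' \<in> PFs then of_nat (p - 1) else (0::complex)) =
        (\<Sum>x'\<in>UNIV - {0}. \<Sum>x\<in>UNIV. if x / x' \<in> PFs then of_nat (p - 1) else (0::complex))"
      by (rule sum.swap)
    also have "(\<Sum>x\<in>UNIV. if x = (0::'a) then of_nat ((p - 1) * (p - 1)) else (0::complex)) = of_nat ((p - 1) * (p - 1))"
      by (simp add: sum.delta)
    finally show ?thesis .
  qed
  also have "(\<Sum>x'\<in>UNIV - {0}. \<Sum>x\<in>UNIV. if x / x' \<in> PFs then of_nat (p - 1) else (0::complex)) =
       (\<Sum>x'\<in>UNIV - {0::'a}. of_nat ((p - 1) * (p - 1)))"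
  proof (rule sum.cong[OF refl])
    fix x' :: 'a assume "x' \<in> UNIV - {0}"
    hence "card {x. x / x' \<in> PFs} = p - 1" using card_ratio by simp
    thus "(\<Sum>x\<in>UNIV. if x / x' \<in> PFs then of_nat (p - 1) else (0::complex)) = of_nat ((p - 1) * (p - 1))"
      unfolding sum_if_const by simp
  qed
  also have "\<dots> = of_nat (p ^ m - 1) * of_nat ((p - 1) * (p - 1))"
    using card_UNIV by (simp add: card_Diff_singleton)
  finally have "(\<Sum>y\<in>PFs. \<Sum>y'\<in>PFs. \<Sum>x\<in>UNIV. \<Sum>x'\<in>UNIV. ?f y y' x x') =
      of_nat ((p - 1) * (p - 1)) + of_nat (p ^ m - 1) * of_nat ((p - 1) * (p - 1))" .
  also have "\<dots> = of_nat ((p - 1) * (p - 1) * p ^ m)"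
  proof -
    obtain r where r: "p ^ m = Suc r" using p_gt1 by (metis not0_implies_Suc power_eq_0_iff not_one_less_zero less_imp_not_less gr_implies_not0)
    hence "(p - 1) * (p - 1) + (p ^ m - 1) * ((p - 1) * (p - 1)) = (p - 1) * (p - 1) * p ^ m"
      by (simp add: r)
    thus ?thesis by (metis of_nat_add of_nat_mult)
  qed
  finally show ?thesis .
qed

lemma moment2: "(\<Sum>u\<in>UNIV. T u c * T u c) = (of_nat ((p - 1) * (p - 1) * p ^ m * p ^ m) :: complex)"
  unfolding moment2_a count_N by simp

end


context tsetup begin

lemma zeta_fp: assumes "t \<in> PF" shows "zeta p ^ (y * fp_val p t) = chi (of_nat y * t)"
proof -
  obtain j where j: "t = of_nat j" "j < p" using PF_obtain[OF assms] by blast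
  have "zeta p ^ (y * fp_val p t) = zeta p ^ (y * j)" using j fp_val_of_nat by simp
  also have "\<dots> = chi (of_nat (y * j))" by (simp only: chi_of_nat)
  also have "\<dots> = chi (of_nat y * t)" using j by simp
  finally show ?thesis .
qed

lemma PFs_nat: "(of_nat :: nat \<Rightarrow> 'a) ` {1..<p} = PFs"
proof (intro set_eqI iffI)
  fix x assume "x \<in> (of_nat :: nat \<Rightarrow> 'a) ` {1..<p}"
  then obtain j where j: "j \<in> {1..<p}" "x = of_nat j" by auto
  have "x \<noteq> 0" using j of_nat_0_iff by (auto dest: dvd_imp_le)
  thus "x \<in> PFs" unfolding PFs_def using j by simp
next
  fix x assume "x \<in> PFs"
  then obtain j where j: "x = of_nat j" "j < p" "x \<noteq> 0" unfolding PFs_def using PF_obtain by blast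
  hence "j \<noteq> 0" by (metis of_nat_0)
  thus "x \<in> (of_nat :: nat \<Rightarrow> 'a) ` {1..<p}" using j by auto
qed

lemma inj_nat: "inj_on (of_nat :: nat \<Rightarrow> 'a) {1..<p}"
  using inj_PF by (rule inj_on_subset) auto

lemma sum_nat_PFs: "(\<Sum>y\<in>{1..<p}. g (of_nat y :: 'a)) = (\<Sum>y\<in>PFs. g y)"
  using sum.reindex[OF inj_nat, of g] PFs_nat by simp

lemma T_lam: assumes lam: "lam \<in> PFs"
  shows "(\<Sum>y\<in>PFs. \<Sum>x\<in>UNIV. chi (y * (lam * Qf u c x))) = T u c"
proof -
  have bij: "bij_betw (\<lambda>y. y * lam) PFs PFs"
    by (rule bij_betwI[where g = "\<lambda>y. y / lam"])
       (use lam in \<open>auto simp: PFs_def PF_mult PF_divide\<close>)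
  have "T u c = (\<Sum>y\<in>PFs. \<Sum>x\<in>UNIV. chi ((y * lam) * Qf u c x))"
    unfolding T_def using sum.reindex_bij_betw[OF bij, of "\<lambda>y. \<Sum>x\<in>UNIV. chi (y * Qf u c x)"] by simp
  thus ?thesis by (simp add: mult.assoc)
qed

lemma S_T: assumes lam: "lam \<in> PFs"
  shows "S p m k lam a b c = T (a + b) c + T (a - b) c"
proof -
  have "S p m k lam a b c =
    (\<Sum>y\<in>{1..<p}. \<Sum>x\<in>UNIV. chi (of_nat y * Qf (a + b) c x) + chi (of_nat y * (lam * Qf (a - b) c x)))"
  proof -
    have e2: "tr p m ((a - b) * lam * x ^ 2 + c * lam * x ^ (p ^ k + 1)) = lam * Qf (a - b) c x" for x
    proof -
      have "(a - b) * lam * x ^ 2 + c * lam * x ^ (p ^ k + 1) = lam * ((a - b) * x ^ 2 + c * x ^ (p ^ k + 1))"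
        by (simp add: algebra_simps)
      thus ?thesis unfolding Qf_def using tr_scale[OF PFs_PF[OF lam]] by simp
    qed
    have inner: "zeta p ^ (y * fp_val p (tr p m ((a + b) * x ^ 2 + c * x ^ (p ^ k + 1)))) +
        zeta p ^ (y * fp_val p (tr p m ((a - b) * lam * x ^ 2 + c * lam * x ^ (p ^ k + 1)))) =
        chi (of_nat y * Qf (a + b) c x) + chi (of_nat y * (lam * Qf (a - b) c x))" for y x
    proof -
      have e1: "tr p m ((a + b) * x ^ 2 + c * x ^ (p ^ k + 1)) = Qf (a + b) c x" unfolding Qf_def ..
      have q1: "Qf (a + b) c x \<in> PF" unfolding Qf_def by (rule tr_in_PF)
      have q2: "lam * Qf (a - b) c x \<in> PF" using PF_mult PFs_PF[OF lam] tr_in_PF unfolding Qf_def by blast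
      show ?thesis unfolding e1 e2 zeta_fp[OF q1] zeta_fp[OF q2] ..
    qed
    show ?thesis unfolding S_def inner ..
  qed
  also have "\<dots> = (\<Sum>y\<in>PFs. \<Sum>x\<in>UNIV. chi (y * Qf (a + b) c x) + chi (y * (lam * Qf (a - b) c x)))"
    by (rule sum_nat_PFs)
  also have "\<dots> = T (a + b) c + (\<Sum>y\<in>PFs. \<Sum>x\<in>UNIV. chi (y * (lam * Qf (a - b) c x)))"
    unfolding T_def by (simp add: sum.distrib)
  also have "\<dots> = T (a + b) c + T (a - b) c" using T_lam[OF lam] by simp
  finally show ?thesis .
qed

end


lemma sum_group_real:
  fixes F :: "'x::finite \<Rightarrow> real" and g :: "real \<Rightarrow> real"
  assumes "finite L" "range F \<subseteq> L"
  shows "(\<Sum>u\<in>UNIV. g (F u)) = (\<Sum>t\<in>L. g t * real (card {u. F u = t}))"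
proof -
  have "(\<Sum>u\<in>UNIV. g (F u)) = (\<Sum>t\<in>L. \<Sum>u\<in>{x\<in>UNIV. F x = t}. g (F u))"
    by (rule sum.group[symmetric]) (use assms in auto)
  also have "\<dots> = (\<Sum>t\<in>L. g t * real (card {u. F u = t}))"
    by (rule sum.cong) auto
  finally show ?thesis .
qed

context tsetup begin

definition KK :: real where "KK = (real p - 1) * real p ^ m"
definition HH :: real where "HH = (real p - 1) * real p ^ ((m + 1) div 2)"
definition TR :: "'a \<Rightarrow> 'a \<Rightarrow> real" where "TR u c = Re (T u c)"

definition ss :: real where "ss = real p ^ ((m - 1) div 2)"

lemma P_facts:
  "real p ^ m = real p * ss ^ 2" "real p ^ (m - 1) = ss ^ 2" "real p ^ ((m + 1) div 2) = real p * ss"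
  "real p ^ (2 * m) = real p ^ 2 * ss ^ 4" "real p ^ (2 * (m - 1)) = ss ^ 4" "real p ^ (2 * m - 1) = real p * ss ^ 4"
proof -
  obtain j where j: "m = 2 * j + 1" using odd_m oddE by blast
  have jj: "(m - 1) div 2 = j" "(m + 1) div 2 = Suc j" "m - 1 = 2 * j" "2 * m - 1 = Suc (4 * j)" "2 * (m - 1) = 4 * j"
    "2 * m = 4 * j + 2" using j by auto
  have s: "ss = real p ^ j" unfolding ss_def jj(1) ..
  have pw: "\<And>a. (real p ^ j) ^ a = real p ^ (j * a)" by (simp add: power_mult)
  show "real p ^ m = real p * ss ^ 2" unfolding s pw by (simp add: j power_add mult.commute)
  show "real p ^ (m - 1) = ss ^ 2" unfolding s pw jj by (simp add: mult.commute)
  show "real p ^ ((m + 1) div 2) = real p * ss" unfolding s jj by simp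
  show "real p ^ (2 * m) = real p ^ 2 * ss ^ 4" unfolding s pw jj by (simp add: power_add mult.commute power2_eq_square)
  show "real p ^ (2 * (m - 1)) = ss ^ 4" unfolding s pw jj by (simp add: mult.commute)
  show "real p ^ (2 * m - 1) = real p * ss ^ 4" unfolding s pw jj by (simp add: mult.commute)
qed

lemma ss_ge: "ss \<ge> 3"
proof -
  have h1: "(m - 1) div 2 \<ge> 1" using m3 odd_m by presburger
  have "real p ^ 1 \<le> real p ^ ((m - 1) div 2)" by (rule power_increasing[OF h1]) (use p_gt1 in simp)
  hence "real p \<le> ss" unfolding ss_def by simp
  thus ?thesis using p_ge3 by linarith
qed
lemma P_ge: "real p \<ge> 3" using p_ge3 by simp

lemma hh_real: "hh = complex_of_real HH"
  unfolding hh_def HH_def using p_gt1 by (simp add: of_nat_diff)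

lemma T_real: "T u c = complex_of_real (TR u c)"
proof -
  have "\<exists>r. T u c = complex_of_real r"
  proof (cases "c = 0")
    case True
    show ?thesis
    proof (cases "u = 0")
      case True thus ?thesis using \<open>c = 0\<close> T00 by (intro exI[of _ "real (p - 1) * real (p ^ m)"]) simp
    next
      case False thus ?thesis using \<open>c = 0\<close> T_u0 by (intro exI[of _ 0]) simp
    qed
  next
    case False
    thus ?thesis using T_c[OF False, of u] hh_real by (metis of_real_0 of_real_minus)
  qed
  thus ?thesis unfolding TR_def by auto
qed

lemma TR_00: "TR 0 0 = KK"
  unfolding TR_def KK_def using T00 p_gt1 by (simp add: of_nat_diff)

lemma TR_u0: "u \<noteq> 0 \<Longrightarrow> TR u 0 = 0"
  unfolding TR_def using T_u0 by simp

lemma TR_c: "c \<noteq> 0 \<Longrightarrow> TR u c \<in> {0, HH, - HH}"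
  using T_c[of c u] T_real[of u c] hh_real by auto

lemma TR_sum1: "(\<Sum>u\<in>UNIV. TR u c) = (real p - 1) * real p ^ m"
proof -
  have "complex_of_real (\<Sum>u\<in>UNIV. TR u c) = (\<Sum>u\<in>UNIV. T u c)" by (simp add: T_real)
  also have "\<dots> = complex_of_real ((real p - 1) * real p ^ m)" unfolding moment1 using p_gt1 by (simp add: of_nat_diff)
  finally show ?thesis by (simp only: of_real_eq_iff)
qed

lemma TR_sum2: "(\<Sum>u\<in>UNIV. TR u c ^ 2) = ((real p - 1) * real p ^ m) ^ 2"
proof -
  have "complex_of_real (\<Sum>u\<in>UNIV. TR u c ^ 2) = (\<Sum>u\<in>UNIV. T u c * T u c)" by (simp add: T_real power2_eq_square)
  also have "\<dots> = complex_of_real (((real p - 1) * real p ^ m) ^ 2)" unfolding moment2 using p_gt1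
    by (simp add: of_nat_diff power2_eq_square power_mult_distrib mult_ac)
  finally show ?thesis by (simp only: of_real_eq_iff)
qed

definition Np :: "'a \<Rightarrow> real" where "Np c = real (card {u. TR u c = HH})"
definition Nm :: "'a \<Rightarrow> real" where "Nm c = real (card {u. TR u c = - HH})"
definition N0 :: "'a \<Rightarrow> real" where "N0 c = real (card {u. TR u c = 0})"

lemma HH_pos: "HH > 0" unfolding HH_def using p_gt1 by simp

lemma group3: assumes "c \<noteq> 0"
  shows "(\<Sum>u\<in>UNIV. g (TR u c)) = g 0 * N0 c + g HH * Np c + g (- HH) * Nm c"
proof -
  have "(\<Sum>u\<in>UNIV. g (TR u c)) = (\<Sum>t\<in>{0, HH, - HH}. g t * real (card {u. TR u c = t}))"
    by (rule sum_group_real) (use TR_c[OF assms] in auto)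
  also have "\<dots> = g 0 * N0 c + g HH * Np c + g (- HH) * Nm c"
    using HH_pos unfolding N0_def Np_def Nm_def by simp
  finally show ?thesis .
qed

lemma counts: assumes "c \<noteq> 0"
  shows "Np c = (ss ^ 2 + ss) / 2" "Nm c = (ss ^ 2 - ss) / 2" "N0 c = real p * ss ^ 2 - ss ^ 2"
proof -
  have HHs: "HH = (real p - 1) * real p * ss" unfolding HH_def P_facts by simp
  have P1: "real p - 1 > 0" using p_gt1 by simp
  have s0: "ss > 0" using ss_ge by simp
  have nz: "(real p - 1) * real p * ss \<noteq> 0" using P1 s0 p_gt1 by simp
  have e1: "HH * Np c - HH * Nm c = (real p - 1) * (real p * ss ^ 2)"
    using TR_sum1[of c] group3[OF assms, of "\<lambda>t. t"] P_facts by simp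
  hence "((real p - 1) * real p * ss) * (Np c - Nm c) = ((real p - 1) * real p * ss) * ss"
    unfolding HHs by (simp add: algebra_simps power2_eq_square)
  hence d: "Np c - Nm c = ss" using nz by simp
  have e2: "HH ^ 2 * Np c + HH ^ 2 * Nm c = ((real p - 1) * (real p * ss ^ 2)) ^ 2"
    using TR_sum2[of c] group3[OF assms, of "\<lambda>t. t ^ 2"] P_facts by simp
  hence "((real p - 1) * real p * ss) ^ 2 * (Np c + Nm c) = ((real p - 1) * real p * ss) ^ 2 * ss ^ 2"
    unfolding HHs by (simp add: algebra_simps power2_eq_square)
  hence a: "Np c + Nm c = ss ^ 2" using nz by simp
  have e3: "N0 c + Np c + Nm c = real p * ss ^ 2"
    using group3[OF assms, of "\<lambda>t. 1"] card_UNIV P_facts by simp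
  show "Np c = (ss ^ 2 + ss) / 2" using a d by simp
  show "Nm c = (ss ^ 2 - ss) / 2" using a d by simp
  show "N0 c = real p * ss ^ 2 - ss ^ 2" using a e3 by simp
qed

end


lemma card_real_sum: "real (card {x::'x::finite. P x}) = (\<Sum>x\<in>UNIV. if P x then 1 else 0)"
  by (simp add: sum.If_cases)

lemma sum_triple: "(\<Sum>t\<in>(UNIV::('x::finite \<times> 'y::finite \<times> 'z::finite) set). f t) =
   (\<Sum>a\<in>UNIV. \<Sum>b\<in>UNIV. \<Sum>c\<in>UNIV. (f (a, b, c) :: real))"
proof -
  have "(\<Sum>t\<in>(UNIV::('x \<times> 'y \<times> 'z) set). f t) = (\<Sum>t\<in>UNIV \<times> UNIV. f t)" by (simp add: UNIV_Times_UNIV)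
  also have "\<dots> = (\<Sum>a\<in>UNIV. \<Sum>bc\<in>UNIV. f (a, bc))" by (rule sum.cartesian_product')
  also have "\<dots> = (\<Sum>a\<in>UNIV. \<Sum>bc\<in>UNIV \<times> UNIV. f (a, bc))" by (simp add: UNIV_Times_UNIV)
  also have "\<dots> = (\<Sum>a\<in>UNIV. \<Sum>b\<in>UNIV. \<Sum>c\<in>UNIV. f (a, b, c))"
    by (rule sum.cong[OF refl], rule sum.cartesian_product')
  finally show ?thesis .
qed

lemma swap_out: "(\<Sum>u\<in>U. \<Sum>w\<in>W. \<Sum>c\<in>C. f u w c) = (\<Sum>c\<in>C. \<Sum>u\<in>U. \<Sum>w\<in>W. (f u w c :: real))"
proof -
  have "(\<Sum>u\<in>U. \<Sum>w\<in>W. \<Sum>c\<in>C. f u w c) = (\<Sum>u\<in>U. \<Sum>c\<in>C. \<Sum>w\<in>W. f u w c)"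
    by (rule sum.cong[OF refl], rule sum.swap)
  also have "\<dots> = (\<Sum>c\<in>C. \<Sum>u\<in>U. \<Sum>w\<in>W. f u w c)" by (rule sum.swap)
  finally show ?thesis .
qed

context tsetup begin

lemma four_ne0: "(4::'a) \<noteq> 0"
proof -
  have "(2::'a) * 2 \<noteq> 0" using two_ne0 by (rule no_zero_divisors) (rule two_ne0)
  thus ?thesis by simp
qed

lemma reindex_pm: "(\<Sum>a\<in>UNIV. \<Sum>b\<in>UNIV. f (a + b) (a - b)) = (\<Sum>u\<in>UNIV. \<Sum>w\<in>(UNIV::'a set). (f u w :: real))"
proof -
  define \<phi> where "\<phi> = (\<lambda>(a::'a, b::'a). (a + b, a - b))"
  have bij: "bij_betw \<phi> (UNIV \<times> UNIV) (UNIV \<times> UNIV)"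
  proof (rule bij_betwI[where g = "\<lambda>(u, w). ((u + w) / 2, (u - w) / 2)"])
    show "\<phi> \<in> UNIV \<times> UNIV \<rightarrow> UNIV \<times> UNIV" by simp
    show "(\<lambda>(u, w). ((u + w) / 2, (u - w) / 2)) \<in> UNIV \<times> UNIV \<rightarrow> UNIV \<times> (UNIV::'a set)" by simp
    show "(\<lambda>(u, w). ((u + w) / 2, (u - w) / 2)) (\<phi> x) = x" for x
      unfolding \<phi>_def using two_ne0 four_ne0 by (cases x) (simp add: field_simps)
    show "\<phi> ((\<lambda>(u, w). ((u + w) / 2, (u - w) / 2)) y) = y" for y
      unfolding \<phi>_def using two_ne0 four_ne0 by (cases y) (simp add: field_simps)
  qed
  have "(\<Sum>a\<in>UNIV. \<Sum>b\<in>UNIV. f (a + b) (a - b)) = (\<Sum>ab\<in>UNIV \<times> UNIV. (case_prod f) (\<phi> ab))"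
    unfolding sum.cartesian_product \<phi>_def by (simp add: case_prod_unfold)
  also have "\<dots> = (\<Sum>uw\<in>UNIV \<times> UNIV. case_prod f uw)"
    using sum.reindex_bij_betw[OF bij, of "case_prod f"] by simp
  also have "\<dots> = (\<Sum>u\<in>UNIV. \<Sum>w\<in>UNIV. f u w)" by (simp add: sum.cartesian_product)
  finally show ?thesis .
qed

definition Z :: "'a \<Rightarrow> real \<Rightarrow> real" where
  "Z c v = (\<Sum>u\<in>UNIV. \<Sum>w\<in>UNIV. if TR u c + TR w c = v then 1 else 0)"

lemma count_S: assumes lam: "lam \<in> PFs"
  shows "real (card {(a, b, c). S p m k lam a b c = complex_of_real v}) = (\<Sum>c\<in>UNIV. Z c v)"
proof -
  have "real (card {(a, b, c). S p m k lam a b c = complex_of_real v}) =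
      (\<Sum>a\<in>UNIV. \<Sum>b\<in>UNIV. \<Sum>c\<in>UNIV. if TR (a + b) c + TR (a - b) c = v then 1 else 0)"
    unfolding card_real_sum sum_triple S_T[OF lam] T_real by (simp flip: of_real_add)
  also have "\<dots> = (\<Sum>u\<in>UNIV. \<Sum>w\<in>UNIV. \<Sum>c\<in>UNIV. if TR u c + TR w c = v then 1 else 0)"
    by (rule reindex_pm)
  also have "\<dots> = (\<Sum>c\<in>UNIV. Z c v)" unfolding Z_def by (rule swap_out)
  finally show ?thesis .
qed

definition ind :: "bool \<Rightarrow> real" where "ind b = (if b then 1 else 0)"

lemma Z_c: assumes c: "c \<noteq> 0"
  shows "Z c v =
    ind (0 + 0 = v) * N0 c * N0 c + ind (0 + HH = v) * N0 c * Np c + ind (0 + - HH = v) * N0 c * Nm c +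
    ind (HH + 0 = v) * Np c * N0 c + ind (HH + HH = v) * Np c * Np c + ind (HH + - HH = v) * Np c * Nm c +
    ind (- HH + 0 = v) * Nm c * N0 c + ind (- HH + HH = v) * Nm c * Np c + ind (- HH + - HH = v) * Nm c * Nm c"
proof -
  have "Z c v = (\<Sum>u\<in>UNIV. \<Sum>w\<in>UNIV. ind (TR u c + TR w c = v))" unfolding Z_def ind_def ..
  also have "\<dots> = (\<Sum>u\<in>UNIV. ind (TR u c + 0 = v) * N0 c + ind (TR u c + HH = v) * Np c + ind (TR u c + - HH = v) * Nm c)"
    by (rule sum.cong[OF refl], rule group3[OF c])
  also have "\<dots> = (ind (0 + 0 = v) * N0 c + ind (0 + HH = v) * Np c + ind (0 + - HH = v) * Nm c) * N0 c +
      (ind (HH + 0 = v) * N0 c + ind (HH + HH = v) * Np c + ind (HH + - HH = v) * Nm c) * Np c +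
      (ind (- HH + 0 = v) * N0 c + ind (- HH + HH = v) * Np c + ind (- HH + - HH = v) * Nm c) * Nm c"
    by (rule group3[OF c])
  finally show ?thesis by (simp add: algebra_simps)
qed

lemma Z_0: "Z 0 v = ind (KK + KK = v) + 2 * ind (KK = v) * (real p ^ m - 1) + ind (0 = v) * (real p ^ m - 1) ^ 2"
proof -
  have KK0: "KK \<noteq> 0" unfolding KK_def using p_gt1 by simp
  have c1: "real (card {u. TR u 0 = KK}) = 1"
  proof -
    have "{u. TR u 0 = KK} = {0}"
    proof (intro set_eqI)
      fix u show "u \<in> {u. TR u 0 = KK} \<longleftrightarrow> u \<in> {0}" using TR_00 TR_u0 KK0 by (cases "u = 0") auto
    qed
    thus ?thesis by simp
  qed
  have c2: "real (card {u. TR u 0 = 0}) = real p ^ m - 1"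
  proof -
    have "{u. TR u 0 = 0} = UNIV - {0}"
    proof (intro set_eqI)
      fix u show "u \<in> {u. TR u 0 = 0} \<longleftrightarrow> u \<in> UNIV - {0}" using TR_00 TR_u0 KK0 by (cases "u = 0") auto
    qed
    thus ?thesis using card_UNIV p_gt1 by (simp add: card_Diff_singleton of_nat_diff)
  qed
  have grp: "(\<Sum>u\<in>UNIV. g (TR u 0)) = g KK + g 0 * (real p ^ m - 1)" for g
  proof -
    have "(\<Sum>u\<in>UNIV. g (TR u 0)) = (\<Sum>t\<in>{KK, 0}. g t * real (card {u. TR u 0 = t}))"
    proof (rule sum_group_real)
      show "range (\<lambda>u. TR u 0) \<subseteq> {KK, 0}"
      proof
        fix t assume "t \<in> range (\<lambda>u. TR u 0)"
        then obtain u where u: "t = TR u 0" by blast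
        show "t \<in> {KK, 0}" using TR_00 TR_u0 u by (cases "u = 0") auto
      qed
    qed simp
    also have "\<dots> = g KK + g 0 * (real p ^ m - 1)" using KK0 c1 c2 by simp
    finally show ?thesis .
  qed
  have "Z 0 v = (\<Sum>u\<in>UNIV. \<Sum>w\<in>UNIV. ind (TR u 0 + TR w 0 = v))" unfolding Z_def ind_def ..
  also have "\<dots> = (\<Sum>u\<in>UNIV. ind (TR u 0 + KK = v) + ind (TR u 0 + 0 = v) * (real p ^ m - 1))"
    by (rule sum.cong[OF refl], rule grp)
  also have "\<dots> = (ind (KK + KK = v) + ind (KK + 0 = v) * (real p ^ m - 1)) +
      (ind (0 + KK = v) + ind (0 + 0 = v) * (real p ^ m - 1)) * (real p ^ m - 1)"
    by (rule grp)
  finally show ?thesis by (simp add: algebra_simps power2_eq_square)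
qed

lemma sum_Z: assumes lam: "lam \<in> PFs"
  shows "real (card {(a, b, c). S p m k lam a b c = complex_of_real v}) =
    Z 0 v + (real p ^ m - 1) * Z 1 v"
proof -
  have Zc: "Z c v = Z 1 v" if "c \<noteq> 0" for c
    unfolding Z_c[OF that] Z_c[OF one_neq_zero] counts[OF that] counts[OF one_neq_zero] ..
  have "(\<Sum>c\<in>UNIV. Z c v) = Z 0 v + (\<Sum>c\<in>UNIV - {0}. Z c v)" by (simp add: sum.remove[of UNIV 0])
  also have "(\<Sum>c\<in>UNIV - {0}. Z c v) = (\<Sum>c\<in>UNIV - {0::'a}. Z 1 v)"
    by (rule sum.cong[OF refl], rule Zc) simp
  also have "\<dots> = (real p ^ m - 1) * Z 1 v" using card_UNIV p_gt1 by (simp add: card_Diff_singleton of_nat_diff)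
  finally show ?thesis using count_S[OF lam] by simp
qed

end


context tsetup begin

lemma KK_ge: "KK \<ge> 3 * HH"
proof -
  have "KK = ss * HH" unfolding KK_def HH_def P_facts by (simp add: algebra_simps power2_eq_square)
  thus ?thesis using ss_ge HH_pos by (simp add: mult_right_mono)
qed

lemma Z1_vals:
  "Z 1 (KK + KK) = 0" "Z 1 KK = 0"
  "Z 1 HH = 2 * N0 1 * Np 1" "Z 1 (- HH) = 2 * N0 1 * Nm 1"
  "Z 1 (2 * HH) = Np 1 * Np 1" "Z 1 (- 2 * HH) = Nm 1 * Nm 1"
  "Z 1 0 = N0 1 * N0 1 + 2 * Np 1 * Nm 1"
  using HH_pos KK_ge unfolding Z_c[OF one_neq_zero] ind_def by (auto simp: algebra_simps)

lemma Z0_vals: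
  "Z 0 (KK + KK) = 1" "Z 0 KK = 2 * (real p ^ m - 1)"
  "Z 0 HH = 0" "Z 0 (- HH) = 0" "Z 0 (2 * HH) = 0" "Z 0 (- 2 * HH) = 0"
  "Z 0 0 = (real p ^ m - 1) ^ 2"
  using HH_pos KK_ge unfolding Z_0 ind_def by auto

end


theorem theorem3p5:
  fixes p m k :: nat and lam :: "'a::{field,finite}"
  assumes "prime p" and "odd p"
    and "card (UNIV::'a set) = p ^ m" and "of_nat p = (0::'a)"
    and "odd m" and "m \<ge> 3" and "even k" and "k \<ge> 1" and "coprime m k"
    and "lam \<in> range of_nat" and "\<forall>z \<in> range (of_nat :: nat \<Rightarrow> 'a). z ^ 2 \<noteq> lam"
  shows
    "(\<forall>a b c. S p m k lam a b c \<in> complex_of_real ` {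
        2 * (real p - 1) * real p ^ m,
        (real p - 1) * real p ^ m,
        (real p - 1) * real p ^ ((m + 1) div 2),
        - (real p - 1) * real p ^ ((m + 1) div 2),
        2 * (real p - 1) * real p ^ ((m + 1) div 2),
        - 2 * (real p - 1) * real p ^ ((m + 1) div 2),
        0})
   \<and> real (card {(a, b, c). S p m k lam a b c = complex_of_real (2 * (real p - 1) * real p ^ m)}) = 1
   \<and> real (card {(a, b, c). S p m k lam a b c = complex_of_real ((real p - 1) * real p ^ m)})
       = 2 * (real p ^ m - 1)
   \<and> real (card {(a, b, c). S p m k lam a b c = complex_of_real ((real p - 1) * real p ^ ((m + 1) div 2))})
       = (real p ^ m - 1) * (real p ^ m - real p ^ (m - 1)) * (real p ^ (m - 1) + real p ^ ((m - 1) div 2))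
   \<and> real (card {(a, b, c). S p m k lam a b c = complex_of_real (- (real p - 1) * real p ^ ((m + 1) div 2))})
       = (real p ^ m - 1) * (real p ^ m - real p ^ (m - 1)) * (real p ^ (m - 1) - real p ^ ((m - 1) div 2))
   \<and> real (card {(a, b, c). S p m k lam a b c = complex_of_real (2 * (real p - 1) * real p ^ ((m + 1) div 2))})
       = 1 / 4 * (real p ^ m - 1) * (real p ^ (m - 1) + real p ^ ((m - 1) div 2)) ^ 2
   \<and> real (card {(a, b, c). S p m k lam a b c = complex_of_real (- 2 * (real p - 1) * real p ^ ((m + 1) div 2))})
       = 1 / 4 * (real p ^ m - 1) * (real p ^ (m - 1) - real p ^ ((m - 1) div 2)) ^ 2
   \<and> real (card {(a, b, c). S p m k lam a b c = 0})
       = (real p ^ m - 1) * (real p ^ (2 * m) + 3 / 2 * real p ^ (2 * (m - 1)) - 2 * real p ^ (2 * m - 1)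
           + real p ^ m - 1 / 2 * real p ^ (m - 1) - 1)"
proof -
  interpret tsetup p m "TYPE('a)" k
    by unfold_locales (use assms in auto)
  have lamP: "lam \<in> PFs"
  proof -
    have "lam \<in> PF" using assms(10) unfolding PF_def .
    moreover have "lam \<noteq> 0" using assms(11) by (metis of_nat_0 rangeI power_zero_numeral)
    ultimately show ?thesis unfolding PFs_def by simp
  qed
  have v1: "2 * (real p - 1) * real p ^ m = KK + KK" unfolding KK_def by simp
  have v2: "(real p - 1) * real p ^ m = KK" unfolding KK_def ..
  have v3: "(real p - 1) * real p ^ ((m + 1) div 2) = HH" unfolding HH_def ..
  have v4: "- (real p - 1) * real p ^ ((m + 1) div 2) = - HH" unfolding HH_def by (simp add: algebra_simps)
  have v5: "2 * (real p - 1) * real p ^ ((m + 1) div 2) = 2 * HH" unfolding HH_def by simp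
  have v6: "- 2 * (real p - 1) * real p ^ ((m + 1) div 2) = - 2 * HH" unfolding HH_def by (simp add: algebra_simps)
  have C: "real (card {(a, b, c). S p m k lam a b c = complex_of_real v}) = Z 0 v + (real p ^ m - 1) * Z 1 v" for v
    by (rule sum_Z[OF lamP])
  have C0: "real (card {(a, b, c). S p m k lam a b c = 0}) = Z 0 0 + (real p ^ m - 1) * Z 1 0"
    using C[of 0] by simp
  note cnt = counts[OF one_neq_zero]
  have vals: "S p m k lam a b c \<in> complex_of_real ` {KK + KK, KK, HH, - HH, 2 * HH, - 2 * HH, 0}" for a b c
  proof -
    have "S p m k lam a b c = complex_of_real (TR (a + b) c + TR (a - b) c)"
      unfolding S_T[OF lamP] T_real by simp
    moreover have "TR (a + b) c + TR (a - b) c \<in> {KK + KK, KK, HH, - HH, 2 * HH, - 2 * HH, 0}"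
    proof (cases "c = 0")
      case True
      have h: "TR u 0 = KK \<or> TR u 0 = 0" for u using TR_00 TR_u0 by (cases "u = 0") auto
      show ?thesis using h[of "a + b"] h[of "a - b"] True by auto
    next
      case False
      thus ?thesis using TR_c[OF False, of "a + b"] TR_c[OF False, of "a - b"] by auto
    qed
    ultimately show ?thesis by blast
  qed
  have sdef: "real p ^ ((m - 1) div 2) = ss" unfolding ss_def ..
  have r1: "real (card {(a, b, c). S p m k lam a b c = complex_of_real (2 * (real p - 1) * real p ^ m)}) = 1"
    unfolding v1 C Z1_vals Z0_vals by simp
  have r2: "real (card {(a, b, c). S p m k lam a b c = complex_of_real ((real p - 1) * real p ^ m)})
       = 2 * (real p ^ m - 1)"
    unfolding v2 C Z1_vals Z0_vals by simp
  have r3: "real (card {(a, b, c). S p m k lam a b c = complex_of_real ((real p - 1) * real p ^ ((m + 1) div 2))})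
       = (real p ^ m - 1) * (real p ^ m - real p ^ (m - 1)) * (real p ^ (m - 1) + real p ^ ((m - 1) div 2))"
    unfolding v3 C Z1_vals Z0_vals cnt unfolding sdef P_facts by (simp add: field_simps power2_eq_square)
  have r4: "real (card {(a, b, c). S p m k lam a b c = complex_of_real (- (real p - 1) * real p ^ ((m + 1) div 2))})
       = (real p ^ m - 1) * (real p ^ m - real p ^ (m - 1)) * (real p ^ (m - 1) - real p ^ ((m - 1) div 2))"
    unfolding v4 C Z1_vals Z0_vals cnt unfolding sdef P_facts by (simp add: field_simps power2_eq_square)
  have r5: "real (card {(a, b, c). S p m k lam a b c = complex_of_real (2 * (real p - 1) * real p ^ ((m + 1) div 2))})
       = 1 / 4 * (real p ^ m - 1) * (real p ^ (m - 1) + real p ^ ((m - 1) div 2)) ^ 2"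
    unfolding v5 C Z1_vals Z0_vals cnt unfolding sdef P_facts by (simp add: field_simps power2_eq_square)
  have r6: "real (card {(a, b, c). S p m k lam a b c = complex_of_real (- 2 * (real p - 1) * real p ^ ((m + 1) div 2))})
       = 1 / 4 * (real p ^ m - 1) * (real p ^ (m - 1) - real p ^ ((m - 1) div 2)) ^ 2"
    unfolding v6 C Z1_vals Z0_vals cnt unfolding sdef P_facts by (simp add: field_simps power2_eq_square)
  have r7: "real (card {(a, b, c). S p m k lam a b c = 0})
       = (real p ^ m - 1) * (real p ^ (2 * m) + 3 / 2 * real p ^ (2 * (m - 1)) - 2 * real p ^ (2 * m - 1)
           + real p ^ m - 1 / 2 * real p ^ (m - 1) - 1)"
    unfolding C0 Z1_vals Z0_vals cnt unfolding sdef P_facts by (simp add: field_simps power2_eq_square power4_eq_xxxx)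
  have r0: "\<forall>a b c. S p m k lam a b c \<in> complex_of_real ` {
        2 * (real p - 1) * real p ^ m,
        (real p - 1) * real p ^ m,
        (real p - 1) * real p ^ ((m + 1) div 2),
        - (real p - 1) * real p ^ ((m + 1) div 2),
        2 * (real p - 1) * real p ^ ((m + 1) div 2),
        - 2 * (real p - 1) * real p ^ ((m + 1) div 2),
        0}"
    unfolding v1 v2 v3 v4 v5 v6 using vals by blast
  show ?thesis using r0 r1 r2 r3 r4 r5 r6 r7 by blast
qed



end
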